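(* Every convex polyiamond can be domed.
   Context: All equilateral triangles have unit edge length. A polyiamond is a polygon that is a union of unit equilateral triangles glued edge to edge. A convex polygon $P$ can be domed if there is a convex polyhedron that has $P$ as one face and all of whose other faces are convex polyiamonds. *)

theory Defs
  imports "HOL-Analysis.Analysis"
begin

definition unit_triangle :: "(real^3) set \<Rightarrow> bool" where
  "unit_triangle t \<longleftrightarrow>
     (\<exists>a b c. t = convex hull {a, b, c} \<and> dist a b = 1 \<and> dist b c = 1 \<and> dist a c = 1)"

text \<open>A polyiamond: a (planar) polygon which is the union of finitely many unit
equilateral triangles glued edge to edge, i.e. any two distinct triangles meet in
a common face of both (empty, a common vertex, or a common edge).\<close>
definition polyiamond :: "(real^3) set \<Rightarrow> bool" where
  "polyiamond P \<longleftrightarrow> aff_dim P = 2 \<and>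
     (\<exists>T. finite T \<and> T \<noteq> {} \<and> (\<forall>t\<in>T. unit_triangle t) \<and> P = \<Union>T \<and>
        (\<forall>t1\<in>T. \<forall>t2\<in>T. t1 \<noteq> t2 \<longrightarrow> (t1 \<inter> t2) face_of t1 \<and> (t1 \<inter> t2) face_of t2))"

definition convex_polyiamond :: "(real^3) set \<Rightarrow> bool" where
  "convex_polyiamond P \<longleftrightarrow> convex P \<and> polyiamond P"

text \<open>A convex polyhedron: a 3-dimensional convex polytope in R^3; its faces are its facets.\<close>
definition convex_polyhedron :: "(real^3) set \<Rightarrow> bool" where
  "convex_polyhedron Q \<longleftrightarrow> polytope Q \<and> aff_dim Q = 3"

definition can_be_domed :: "(real^3) set \<Rightarrow> bool" where
  "can_be_domed P \<longleftrightarrow>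
     (\<exists>Q. convex_polyhedron Q \<and> P facet_of Q \<and>
          (\<forall>F. F facet_of Q \<and> F \<noteq> P \<longrightarrow> convex_polyiamond F))"

end

theory Submission imports Defs begin



definition Qf :: "real \<Rightarrow> real \<Rightarrow> real" where "Qf x y = x*x + x*y + y*y"

locale tb =
  fixes p0 u w :: "real^3"
  assumes uu: "u \<bullet> u = 1" and ww: "w \<bullet> w = 1" and uw: "u \<bullet> w = 1/2"
begin

definition B :: "real \<Rightarrow> real \<Rightarrow> real^3" where "B x y = p0 + x *\<^sub>R u + y *\<^sub>R w"
definition gX :: "real^3" where "gX = (4/3) *\<^sub>R u - (2/3) *\<^sub>R w"
definition gY :: "real^3" where "gY = (4/3) *\<^sub>R w - (2/3) *\<^sub>R u"
definition X :: "real^3 \<Rightarrow> real" where "X p = gX \<bullet> (p - p0)"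
definition Y :: "real^3 \<Rightarrow> real" where "Y p = gY \<bullet> (p - p0)"
definition Pi :: "(real^3) set" where "Pi = {B x y | x y. True}"

lemma wu: "w \<bullet> u = 1/2" using uw by (simp add: inner_commute)

lemma X_B [simp]: "X (B x y) = x"
  unfolding X_def B_def gX_def
  by (simp add: inner_add_left inner_add_right inner_diff_left inner_diff_right uu ww uw wu algebra_simps)

lemma Y_B [simp]: "Y (B x y) = y"
  unfolding Y_def B_def gY_def
  by (simp add: inner_add_left inner_add_right inner_diff_left inner_diff_right uu ww uw wu algebra_simps)

lemma X_aff: "X p = gX \<bullet> p - gX \<bullet> p0"
  by (simp add: X_def inner_diff_right)
lemma Y_aff: "Y p = gY \<bullet> p - gY \<bullet> p0"
  by (simp add: Y_def inner_diff_right)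

lemma B_diff: "B x y - B x' y' = (x - x') *\<^sub>R u + (y - y') *\<^sub>R w"
  by (simp add: B_def algebra_simps)

lemma norm2_comb: "(x *\<^sub>R u + y *\<^sub>R w) \<bullet> (x *\<^sub>R u + y *\<^sub>R w) = Qf x y"
  by (simp add: Qf_def inner_add_left inner_add_right uu ww uw wu algebra_simps)

lemma dist_B: "(dist (B x y) (B x' y'))\<^sup>2 = Qf (x-x') (y-y')"
  by (simp add: dist_norm B_diff power2_norm_eq_inner norm2_comb)

lemma dist_B_1: "Qf (x-x') (y-y') = 1 \<Longrightarrow> dist (B x y) (B x' y') = 1"
proof -
  assume "Qf (x-x') (y-y') = 1"
  then have "(dist (B x y) (B x' y'))\<^sup>2 = 1" using dist_B by simp
  then show ?thesis using zero_le_dist[of "B x y" "B x' y'"] by (auto simp: power2_eq_1_iff)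
qed

lemma B_in_Pi [simp]: "B x y \<in> Pi"
  by (auto simp: Pi_def)

lemma Pi_B: "p \<in> Pi \<Longrightarrow> p = B (X p) (Y p)"
  by (auto simp: Pi_def)

lemma B_comb3: "\<alpha>+\<beta>+\<gamma> = 1 \<Longrightarrow> \<alpha> *\<^sub>R B x1 y1 + \<beta> *\<^sub>R B x2 y2 + \<gamma> *\<^sub>R B x3 y3
   = B (\<alpha>*x1+\<beta>*x2+\<gamma>*x3) (\<alpha>*y1+\<beta>*y2+\<gamma>*y3)"
proof -
  assume h: "\<alpha>+\<beta>+\<gamma> = 1"
  have "\<alpha> *\<^sub>R B x1 y1 + \<beta> *\<^sub>R B x2 y2 + \<gamma> *\<^sub>R B x3 y3 =
     (\<alpha>+\<beta>+\<gamma>) *\<^sub>R p0 + (\<alpha>*x1+\<beta>*x2+\<gamma>*x3) *\<^sub>R u + (\<alpha>*y1+\<beta>*y2+\<gamma>*y3) *\<^sub>R w"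
    by (simp add: B_def algebra_simps scaleR_add_right)
  then show ?thesis using h by (simp add: B_def)
qed

lemma B_comb2: "\<alpha>+\<beta> = 1 \<Longrightarrow> \<alpha> *\<^sub>R B x1 y1 + \<beta> *\<^sub>R B x2 y2 = B (\<alpha>*x1+\<beta>*x2) (\<alpha>*y1+\<beta>*y2)"
  using B_comb3[of \<alpha> \<beta> 0 x1 y1 x2 y2 0 0] by simp

lemma convex_Pi: "convex Pi"
  unfolding convex_def Pi_def using B_comb2 by blast

lemma B_inj: "B x y = B x' y' \<longleftrightarrow> x = x' \<and> y = y'"
  by (metis X_B Y_B)

end



lemma convex_slab: "convex {p::'a::real_inner. \<alpha> \<le> g \<bullet> p - h \<and> g \<bullet> p - h \<le> \<beta>}"
proof -
  have "{p::'a. \<alpha> \<le> g \<bullet> p - h \<and> g \<bullet> p - h \<le> \<beta>} = {p. g \<bullet> p \<ge> \<alpha> + h} \<inter> {p. g \<bullet> p \<le> \<beta> + h}"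
    by auto
  then show ?thesis by (simp add: convex_Int convex_halfspace_ge convex_halfspace_le)
qed

lemma strip_face:
  fixes g :: "'a::euclidean_space" and m m' :: int
  assumes "convex C" "\<And>p. p \<in> C \<Longrightarrow> of_int m \<le> g \<bullet> p - h \<and> g \<bullet> p - h \<le> of_int m + 1"
  shows "(C \<inter> {p. of_int m' \<le> g \<bullet> p - h \<and> g \<bullet> p - h \<le> of_int m' + 1}) face_of C"
proof -
  consider "m' = m" | "m' = m + 1" | "m' = m - 1" | "m' \<ge> m + 2" | "m' \<le> m - 2" by linarith
  then show ?thesis
  proof cases
    case 1
    then have "C \<inter> {p. of_int m' \<le> g \<bullet> p - h \<and> g \<bullet> p - h \<le> of_int m' + 1} = C" using assms(2) by auto
    then show ?thesis using assms(1) face_of_refl by auto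
  next
    case 2
    then have "C \<inter> {p. of_int m' \<le> g \<bullet> p - h \<and> g \<bullet> p - h \<le> of_int m' + 1} = C \<inter> {p. g \<bullet> p = of_int m + 1 + h}"
      using assms(2) by force
    moreover have "(C \<inter> {p. g \<bullet> p = of_int m + 1 + h}) face_of C"
      by (rule face_of_Int_supporting_hyperplane_le) (use assms in force)+
    ultimately show ?thesis by simp
  next
    case 3
    then have "C \<inter> {p. of_int m' \<le> g \<bullet> p - h \<and> g \<bullet> p - h \<le> of_int m' + 1} = C \<inter> {p. g \<bullet> p = of_int m + h}"
      using assms(2) by force
    moreover have "(C \<inter> {p. g \<bullet> p = of_int m + h}) face_of C"
      by (rule face_of_Int_supporting_hyperplane_ge) (use assms in force)+
    ultimately show ?thesis by simp
  next
    case 4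
    then have "C \<inter> {p. of_int m' \<le> g \<bullet> p - h \<and> g \<bullet> p - h \<le> of_int m' + 1} = {}"
    proof -
      have "real_of_int m' \<ge> of_int m + 2" using 4 by linarith
      then show ?thesis using assms(2) by force
    qed
    then show ?thesis by simp
  next
    case 5
    then have "C \<inter> {p. of_int m' \<le> g \<bullet> p - h \<and> g \<bullet> p - h \<le> of_int m' + 1} = {}"
    proof -
      have "real_of_int m' \<le> of_int m - 2" using 5 by linarith
      then show ?thesis using assms(2) by force
    qed
    then show ?thesis by simp
  qed
qed

lemma aff_dim_line:
  fixes S :: "'a::euclidean_space set"
  assumes "S \<subseteq> {q + t *\<^sub>R d | t. True}"
  shows "aff_dim S \<le> 1"
proof -
  have "S \<subseteq> affine hull {q, q + d}"
  proof
    fix x assume "x \<in> S"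
    then obtain t where "x = q + t *\<^sub>R d" using assms by auto
    then have "x = (1 - t) *\<^sub>R q + t *\<^sub>R (q + d)" by (simp add: algebra_simps)
    moreover have "(1 - t) + t = 1" by simp
    ultimately show "x \<in> affine hull {q, q + d}" unfolding affine_hull_2 by blast
  qed
  then have "aff_dim S \<le> aff_dim {q, q + d}"
    by (metis aff_dim_affine_hull aff_dim_subset)
  also have "\<dots> \<le> 1" by simp
  finally show ?thesis .
qed

context tb
begin

definition Sm :: "real^3 \<Rightarrow> real" where "Sm p = X p + Y p"

lemma Sm_aff: "Sm p = (gX + gY) \<bullet> p - (gX + gY) \<bullet> p0"
  by (simp add: Sm_def X_aff Y_aff inner_add_left)

lemma Sm_B [simp]: "Sm (B x y) = x + y" by (simp add: Sm_def)

lemma X_comb: "\<alpha> + \<beta> = 1 \<Longrightarrow> X (\<alpha> *\<^sub>R p + \<beta> *\<^sub>R q) = \<alpha> * X p + \<beta> * X q"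
proof -
  assume "\<alpha> + \<beta> = 1"
  then have b: "\<beta> = 1 - \<alpha>" by simp
  show ?thesis unfolding b X_aff by (simp add: inner_add_right algebra_simps)
qed
lemma Y_comb: "\<alpha> + \<beta> = 1 \<Longrightarrow> Y (\<alpha> *\<^sub>R p + \<beta> *\<^sub>R q) = \<alpha> * Y p + \<beta> * Y q"
proof -
  assume "\<alpha> + \<beta> = 1"
  then have b: "\<beta> = 1 - \<alpha>" by simp
  show ?thesis unfolding b Y_aff by (simp add: inner_add_right algebra_simps)
qed
lemma Sm_comb: "\<alpha> + \<beta> = 1 \<Longrightarrow> Sm (\<alpha> *\<^sub>R p + \<beta> *\<^sub>R q) = \<alpha> * Sm p + \<beta> * Sm q"
  by (simp add: Sm_def X_comb Y_comb algebra_simps)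

definition strip :: "(real^3 \<Rightarrow> real) \<Rightarrow> int \<Rightarrow> (real^3) set" where
  "strip f m = {p. of_int m \<le> f p \<and> f p \<le> of_int m + 1}"

definition cell :: "int \<Rightarrow> int \<Rightarrow> int \<Rightarrow> (real^3) set" where
  "cell i j k = Pi \<inter> strip X i \<inter> strip Y j \<inter> strip Sm k"

definition region :: "int \<Rightarrow> int \<Rightarrow> int \<Rightarrow> int \<Rightarrow> int \<Rightarrow> int \<Rightarrow> (real^3) set" where
  "region a1 a2 b1 b2 c1 c2 = {p \<in> Pi. of_int a1 \<le> X p \<and> X p \<le> of_int a2 \<and> of_int b1 \<le> Y p \<and> Y p \<le> of_int b2
      \<and> of_int c1 \<le> Sm p \<and> Sm p \<le> of_int c2}"

lemma strip_X: "strip X m = {p. of_int m \<le> gX \<bullet> p - gX \<bullet> p0 \<and> gX \<bullet> p - gX \<bullet> p0 \<le> of_int m + 1}"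
  by (simp add: strip_def X_aff)
lemma strip_Y: "strip Y m = {p. of_int m \<le> gY \<bullet> p - gY \<bullet> p0 \<and> gY \<bullet> p - gY \<bullet> p0 \<le> of_int m + 1}"
  by (simp add: strip_def Y_aff)
lemma strip_Sm: "strip Sm m = {p. of_int m \<le> (gX+gY) \<bullet> p - (gX+gY) \<bullet> p0 \<and> (gX+gY) \<bullet> p - (gX+gY) \<bullet> p0 \<le> of_int m + 1}"
  by (simp add: strip_def Sm_aff)

lemma convex_strip_X: "convex (strip X m)" unfolding strip_X by (rule convex_slab)
lemma convex_strip_Y: "convex (strip Y m)" unfolding strip_Y by (rule convex_slab)
lemma convex_strip_Sm: "convex (strip Sm m)" unfolding strip_Sm by (rule convex_slab)

lemma convex_cell: "convex (cell i j k)"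
  unfolding cell_def
  by (intro convex_Int convex_Pi convex_strip_X convex_strip_Y convex_strip_Sm)

lemma convex_region: "convex (region a1 a2 b1 b2 c1 c2)"
proof -
  have "region a1 a2 b1 b2 c1 c2 = Pi \<inter> {p. of_int a1 \<le> gX \<bullet> p - gX \<bullet> p0 \<and> gX \<bullet> p - gX \<bullet> p0 \<le> of_int a2}
     \<inter> {p. of_int b1 \<le> gY \<bullet> p - gY \<bullet> p0 \<and> gY \<bullet> p - gY \<bullet> p0 \<le> of_int b2}
     \<inter> {p. of_int c1 \<le> (gX+gY) \<bullet> p - (gX+gY) \<bullet> p0 \<and> (gX+gY) \<bullet> p - (gX+gY) \<bullet> p0 \<le> of_int c2}"
    by (auto simp: region_def X_aff Y_aff Sm_aff)
  then show ?thesis by (simp add: convex_Int convex_Pi convex_slab)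
qed

lemma cell_Int_face: "(cell i j k \<inter> cell i' j' k') face_of cell i j k"
proof -
  let ?C = "cell i j k"
  have e: "?C \<inter> cell i' j' k' = (?C \<inter> strip X i') \<inter> (?C \<inter> strip Y j') \<inter> (?C \<inter> strip Sm k')"
    by (auto simp: cell_def)
  have f1: "(?C \<inter> strip X i') face_of ?C"
    unfolding strip_X
    by (rule strip_face[where m=i, OF convex_cell]) (auto simp: cell_def strip_X)
  have f2: "(?C \<inter> strip Y j') face_of ?C"
    unfolding strip_Y
    by (rule strip_face[where m=j, OF convex_cell]) (auto simp: cell_def strip_Y)
  have f3: "(?C \<inter> strip Sm k') face_of ?C"
    unfolding strip_Sm
    by (rule strip_face[where m=k, OF convex_cell]) (auto simp: cell_def strip_Sm)
  show ?thesis unfolding e by (intro face_of_Int f1 f2 f3)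
qed

lemma cell_up: "cell i j (i+j) = convex hull {B i j, B (i+1) j, B i (j+1)}"
proof
  show "cell i j (i+j) \<subseteq> convex hull {B i j, B (i+1) j, B i (j+1)}"
  proof
    fix p assume p: "p \<in> cell i j (i+j)"
    then have pB: "p = B (X p) (Y p)" unfolding cell_def using Pi_B by blast
    define a where "a = X p - i"
    define b where "b = Y p - j"
    have ab: "0 \<le> a" "0 \<le> b" "a + b \<le> 1" using p by (auto simp: cell_def strip_def a_def b_def Sm_def)
    have "(1 - a - b) *\<^sub>R B i j + a *\<^sub>R B (i+1) j + b *\<^sub>R B i (j+1) = B (X p) (Y p)"
      by (subst B_comb3) (auto simp: a_def b_def algebra_simps)
    then show "p \<in> convex hull {B i j, B (i+1) j, B i (j+1)}"
      unfolding convex_hull_3 using ab pB[symmetric]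
      by (intro CollectI exI[of _ "1-a-b"] exI[of _ a] exI[of _ b]) simp
  qed
next
  show "convex hull {B i j, B (i+1) j, B i (j+1)} \<subseteq> cell i j (i+j)"
    by (intro hull_minimal convex_cell) (auto simp: cell_def strip_def)
qed

lemma cell_dn: "cell i j (i+j+1) = convex hull {B (i+1) j, B i (j+1), B (i+1) (j+1)}"
proof
  show "cell i j (i+j+1) \<subseteq> convex hull {B (i+1) j, B i (j+1), B (i+1) (j+1)}"
  proof
    fix p assume p: "p \<in> cell i j (i+j+1)"
    then have pB: "p = B (X p) (Y p)" unfolding cell_def using Pi_B by blast
    define a where "a = X p - i"
    define b where "b = Y p - j"
    have ab: "a \<le> 1" "b \<le> 1" "a + b \<ge> 1" using p by (auto simp: cell_def strip_def a_def b_def Sm_def)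
    have "(1 - b) *\<^sub>R B (i+1) j + (1 - a) *\<^sub>R B i (j+1) + (a + b - 1) *\<^sub>R B (i+1) (j+1) = B (X p) (Y p)"
      by (subst B_comb3) (auto simp: a_def b_def algebra_simps)
    then show "p \<in> convex hull {B (i+1) j, B i (j+1), B (i+1) (j+1)}"
      unfolding convex_hull_3 using ab pB[symmetric]
      by (intro CollectI exI[of _ "1-b"] exI[of _ "1-a"] exI[of _ "a+b-1"]) simp
  qed
next
  show "convex hull {B (i+1) j, B i (j+1), B (i+1) (j+1)} \<subseteq> cell i j (i+j+1)"
    by (intro hull_minimal convex_cell) (auto simp: cell_def strip_def)
qed

lemma unit_cell: "k = i + j \<or> k = i + j + 1 \<Longrightarrow> unit_triangle (cell i j k)"
proof -
  assume "k = i + j \<or> k = i + j + 1"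
  then show ?thesis
  proof
    assume k: "k = i + j"
    have d1: "dist (B i j) (B (i+1) j) = 1" by (rule dist_B_1) (simp add: Qf_def)
    have d2: "dist (B (i+1) j) (B i (j+1)) = 1" by (rule dist_B_1) (simp add: Qf_def)
    have d3: "dist (B i j) (B i (j+1)) = 1" by (rule dist_B_1) (simp add: Qf_def)
    show ?thesis unfolding unit_triangle_def k cell_up using d1 d2 d3 by (intro exI[of _ "B i j"] exI[of _ "B (i+1) j"] exI[of _ "B i (j+1)"]) simp
  next
    assume k: "k = i + j + 1"
    have d1: "dist (B (i+1) j) (B i (j+1)) = 1" by (rule dist_B_1) (simp add: Qf_def)
    have d2: "dist (B i (j+1)) (B (i+1) (j+1)) = 1" by (rule dist_B_1) (simp add: Qf_def)
    have d3: "dist (B (i+1) j) (B (i+1) (j+1)) = 1" by (rule dist_B_1) (simp add: Qf_def)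
    show ?thesis unfolding unit_triangle_def k cell_dn using d1 d2 d3 by (intro exI[of _ "B (i+1) j"] exI[of _ "B i (j+1)"] exI[of _ "B (i+1) (j+1)"]) simp
  qed
qed

end



lemma conv_strict: "(x::real) \<le> a \<Longrightarrow> y < a \<Longrightarrow> 0 < t \<Longrightarrow> t \<le> 1 \<Longrightarrow> (1-t)*x + t*y < a"
proof -
  assume h: "x \<le> a" "y < a" "0 < t" "t \<le> 1"
  have "(1-t)*x \<le> (1-t)*a" using h by (intro mult_left_mono) simp_all
  moreover have "t*y < t*a" using h by simp
  ultimately show ?thesis by (simp add: algebra_simps)
qed

lemma avl: fixes a x1 x2 x3 x4 x5 x6 :: real
  assumes "a \<le> x1" "a \<le> x2" "a \<le> x3" "a \<le> x4" "a \<le> x5" "a \<le> x6"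
     "a < x1 \<or> a < x2 \<or> a < x3 \<or> a < x4 \<or> a < x5 \<or> a < x6" shows "a < (((x1 + x2) / 2 + (x3 + x4) / 2) / 2 + (x5 + x6) / 2) / 2"
proof -
  have e: "(((x1 + x2) / 2 + (x3 + x4) / 2) / 2 + (x5 + x6) / 2) / 2 = (x1+x2+x3+x4+2*x5+2*x6)/8" by (simp add: field_simps)
  have "8*a < x1+x2+x3+x4+2*x5+2*x6" using assms by auto
  then show ?thesis unfolding e by (simp add: field_simps)
qed
lemma avh: fixes a x1 x2 x3 x4 x5 x6 :: real
  assumes "x1 \<le> a" "x2 \<le> a" "x3 \<le> a" "x4 \<le> a" "x5 \<le> a" "x6 \<le> a"
     "x1 < a \<or> x2 < a \<or> x3 < a \<or> x4 < a \<or> x5 < a \<or> x6 < a" shows "(((x1 + x2) / 2 + (x3 + x4) / 2) / 2 + (x5 + x6) / 2) / 2 < a"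
proof -
  have e: "(((x1 + x2) / 2 + (x3 + x4) / 2) / 2 + (x5 + x6) / 2) / 2 = (x1+x2+x3+x4+2*x5+2*x6)/8" by (simp add: field_simps)
  have "x1+x2+x3+x4+2*x5+2*x6 < 8*a" using assms by auto
  then show ?thesis unfolding e by (simp add: field_simps)
qed

context tb
begin

lemma line_X: "S \<subseteq> Pi \<Longrightarrow> (\<forall>p\<in>S. X p = c) \<Longrightarrow> aff_dim S \<le> 1"
proof -
  assume h: "S \<subseteq> Pi" "\<forall>p\<in>S. X p = c"
  show ?thesis
  proof (rule aff_dim_line[of S "B c 0" w])
    show "S \<subseteq> {B c 0 + t *\<^sub>R w |t. True}"
    proof
      fix p assume p: "p \<in> S"
      then have "p = B (X p) (Y p)" using h Pi_B by blast
      then have "p = B c 0 + (Y p) *\<^sub>R w" using h p by (simp add: B_def)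
      then show "p \<in> {B c 0 + t *\<^sub>R w |t. True}" by blast
    qed
  qed
qed

lemma line_Y: "S \<subseteq> Pi \<Longrightarrow> (\<forall>p\<in>S. Y p = c) \<Longrightarrow> aff_dim S \<le> 1"
proof -
  assume h: "S \<subseteq> Pi" "\<forall>p\<in>S. Y p = c"
  show ?thesis
  proof (rule aff_dim_line[of S "B 0 c" u])
    show "S \<subseteq> {B 0 c + t *\<^sub>R u |t. True}"
    proof
      fix p assume p: "p \<in> S"
      then have "p = B (X p) (Y p)" using h Pi_B by blast
      then have "p = B 0 c + (X p) *\<^sub>R u" using h p by (simp add: B_def algebra_simps)
      then show "p \<in> {B 0 c + t *\<^sub>R u |t. True}" by blast
    qed
  qed
qed

lemma line_Sm: "S \<subseteq> Pi \<Longrightarrow> (\<forall>p\<in>S. Sm p = c) \<Longrightarrow> aff_dim S \<le> 1"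
proof -
  assume h: "S \<subseteq> Pi" "\<forall>p\<in>S. Sm p = c"
  show ?thesis
  proof (rule aff_dim_line[of S "B 0 c" "u - w"])
    show "S \<subseteq> {B 0 c + t *\<^sub>R (u - w) |t. True}"
    proof
      fix p assume p: "p \<in> S"
      then have pB: "p = B (X p) (Y p)" using h Pi_B by blast
      have "Sm p = c" using h p by blast
      then have "Y p = c - X p" by (simp add: Sm_def)
      then have "p = B (X p) (c - X p)" using pB by simp
      also have "\<dots> = B 0 c + (X p) *\<^sub>R (u - w)" by (simp add: B_def algebra_simps)
      finally have "p = B 0 c + (X p) *\<^sub>R (u - w)" .
      then show "p \<in> {B 0 c + t *\<^sub>R (u - w) |t. True}" by blast
    qed
  qed
qed

lemma region_sub_Pi: "region a1 a2 b1 b2 c1 c2 \<subseteq> Pi"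
  by (auto simp: region_def)

lemma mid_region:
  assumes "p \<in> region a1 a2 b1 b2 c1 c2" "q \<in> region a1 a2 b1 b2 c1 c2"
  shows "(1/2) *\<^sub>R p + (1/2) *\<^sub>R q \<in> region a1 a2 b1 b2 c1 c2"
    "X ((1/2) *\<^sub>R p + (1/2) *\<^sub>R q) = (X p + X q)/2"
    "Y ((1/2) *\<^sub>R p + (1/2) *\<^sub>R q) = (Y p + Y q)/2"
    "Sm ((1/2) *\<^sub>R p + (1/2) *\<^sub>R q) = (Sm p + Sm q)/2"
proof -
  show "(1/2) *\<^sub>R p + (1/2) *\<^sub>R q \<in> region a1 a2 b1 b2 c1 c2"
    using convex_region assms by (rule convexD) auto
  show "X ((1/2) *\<^sub>R p + (1/2) *\<^sub>R q) = (X p + X q)/2" by (subst X_comb) auto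
  show "Y ((1/2) *\<^sub>R p + (1/2) *\<^sub>R q) = (Y p + Y q)/2" by (subst Y_comb) auto
  show "Sm ((1/2) *\<^sub>R p + (1/2) *\<^sub>R q) = (Sm p + Sm q)/2" by (subst Sm_comb) auto
qed

lemma strict_point:
  assumes "aff_dim (region a1 a2 b1 b2 c1 c2) = 2"
  shows "\<exists>p\<in>region a1 a2 b1 b2 c1 c2. of_int a1 < X p \<and> X p < of_int a2 \<and> of_int b1 < Y p \<and> Y p < of_int b2
            \<and> of_int c1 < Sm p \<and> Sm p < of_int c2"
proof -
  let ?R = "region a1 a2 b1 b2 c1 c2"
  have sub: "?R \<subseteq> Pi" by (rule region_sub_Pi)
  have "\<not> (\<forall>p\<in>?R. X p = of_int a1)" using line_X[OF sub, of "of_int a1"] assms by linarith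
  then obtain p1 where p1: "p1 \<in> ?R" "X p1 \<noteq> of_int a1" by blast
  have "\<not> (\<forall>p\<in>?R. X p = of_int a2)" using line_X[OF sub, of "of_int a2"] assms by linarith
  then obtain p2 where p2: "p2 \<in> ?R" "X p2 \<noteq> of_int a2" by blast
  have "\<not> (\<forall>p\<in>?R. Y p = of_int b1)" using line_Y[OF sub, of "of_int b1"] assms by linarith
  then obtain p3 where p3: "p3 \<in> ?R" "Y p3 \<noteq> of_int b1" by blast
  have "\<not> (\<forall>p\<in>?R. Y p = of_int b2)" using line_Y[OF sub, of "of_int b2"] assms by linarith
  then obtain p4 where p4: "p4 \<in> ?R" "Y p4 \<noteq> of_int b2" by blast
  have "\<not> (\<forall>p\<in>?R. Sm p = of_int c1)" using line_Sm[OF sub, of "of_int c1"] assms by linarith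
  then obtain p5 where p5: "p5 \<in> ?R" "Sm p5 \<noteq> of_int c1" by blast
  have "\<not> (\<forall>p\<in>?R. Sm p = of_int c2)" using line_Sm[OF sub, of "of_int c2"] assms by linarith
  then obtain p6 where p6: "p6 \<in> ?R" "Sm p6 \<noteq> of_int c2" by blast
  define m12 where "m12 = (1/2) *\<^sub>R p1 + (1/2) *\<^sub>R p2"
  define m34 where "m34 = (1/2) *\<^sub>R p3 + (1/2) *\<^sub>R p4"
  define m56 where "m56 = (1/2) *\<^sub>R p5 + (1/2) *\<^sub>R p6"
  define m where "m = (1/2) *\<^sub>R m12 + (1/2) *\<^sub>R m34"
  define z where "z = (1/2) *\<^sub>R m + (1/2) *\<^sub>R m56"
  note M12 = mid_region[OF p1(1) p2(1), folded m12_def]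
  note M34 = mid_region[OF p3(1) p4(1), folded m34_def]
  note M56 = mid_region[OF p5(1) p6(1), folded m56_def]
  note MM = mid_region[OF M12(1) M34(1), folded m_def]
  note Z = mid_region[OF MM(1) M56(1), folded z_def]
  have bounds: "\<And>p. p \<in> ?R \<Longrightarrow> of_int a1 \<le> X p \<and> X p \<le> of_int a2 \<and> of_int b1 \<le> Y p \<and> Y p \<le> of_int b2
            \<and> of_int c1 \<le> Sm p \<and> Sm p \<le> of_int c2"
    by (auto simp: region_def)
  have b1: "of_int a1 < X p1" "X p2 < of_int a2" "of_int b1 < Y p3" "Y p4 < of_int b2" "of_int c1 < Sm p5" "Sm p6 < of_int c2"
    using bounds[OF p1(1)] bounds[OF p2(1)] bounds[OF p3(1)] bounds[OF p4(1)] bounds[OF p5(1)] bounds[OF p6(1)]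
      p1(2) p2(2) p3(2) p4(2) p5(2) p6(2) by auto
  note bb = bounds[OF p1(1)] bounds[OF p2(1)] bounds[OF p3(1)] bounds[OF p4(1)] bounds[OF p5(1)] bounds[OF p6(1)]
  show ?thesis
    apply (rule bexI[OF _ Z(1)])
    unfolding Z(2-4) MM(2-4) M12(2-4) M34(2-4) M56(2-4)
    apply (intro conjI)
    subgoal by (rule avl) (use bb b1 in auto)+
    subgoal by (rule avh) (use bb b1 in auto)+
    subgoal by (rule avl) (use bb b1 in auto)+
    subgoal by (rule avh) (use bb b1 in auto)+
    subgoal by (rule avl) (use bb b1 in auto)+
    subgoal by (rule avh) (use bb b1 in auto)+
    done
qed

end



context tb
begin

definition cellsT :: "int \<Rightarrow> int \<Rightarrow> int \<Rightarrow> int \<Rightarrow> int \<Rightarrow> int \<Rightarrow> (real^3) set set" where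
  "cellsT a1 a2 b1 b2 c1 c2 = {cell i j k | i j k. (k = i + j \<or> k = i + j + 1) \<and> a1 \<le> i \<and> i + 1 \<le> a2
      \<and> b1 \<le> j \<and> j + 1 \<le> b2 \<and> c1 \<le> k \<and> k + 1 \<le> c2}"

lemma cell_compact: "k = i + j \<or> k = i + j + 1 \<Longrightarrow> compact (cell i j k)"
  by (metis cell_up cell_dn compact_convex_hull finite.emptyI finite_insert finite_imp_compact)

lemma cellsT_finite: "finite (cellsT a1 a2 b1 b2 c1 c2)"
proof -
  have "cellsT a1 a2 b1 b2 c1 c2 \<subseteq> (\<lambda>(i,j,k). cell i j k) ` ({a1..a2} \<times> {b1..b2} \<times> {c1..c2})"
  proof
    fix x assume "x \<in> cellsT a1 a2 b1 b2 c1 c2"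
    then obtain i j k where x: "x = cell i j k" and c: "a1 \<le> i" "i + 1 \<le> a2" "b1 \<le> j" "j + 1 \<le> b2" "c1 \<le> k" "k + 1 \<le> c2"
      unfolding cellsT_def by blast
    then have "(i,j,k) \<in> {a1..a2} \<times> {b1..b2} \<times> {c1..c2}" by auto
    then show "x \<in> (\<lambda>(i,j,k). cell i j k) ` ({a1..a2} \<times> {b1..b2} \<times> {c1..c2})"
      using x by (intro image_eqI[where x="(i,j,k)"]) auto
  qed
  then show ?thesis by (rule finite_subset) auto
qed

lemma cellsT_sub: "\<Union>(cellsT a1 a2 b1 b2 c1 c2) \<subseteq> region a1 a2 b1 b2 c1 c2"
proof
  fix p assume "p \<in> \<Union>(cellsT a1 a2 b1 b2 c1 c2)"
  then obtain i j k where ijk: "p \<in> cell i j k" "a1 \<le> i" "i + 1 \<le> a2" "b1 \<le> j" "j + 1 \<le> b2" "c1 \<le> k" "k + 1 \<le> c2"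
    unfolding cellsT_def by blast
  have r: "real_of_int a1 \<le> of_int i" "real_of_int i + 1 \<le> of_int a2" "real_of_int b1 \<le> of_int j" "real_of_int j + 1 \<le> of_int b2"
    "real_of_int c1 \<le> of_int k" "real_of_int k + 1 \<le> of_int c2"
    using ijk by simp_all
  show "p \<in> region a1 a2 b1 b2 c1 c2"
    using ijk(1) r unfolding cell_def region_def strip_def by auto
qed

lemma strict_in_cells:
  assumes "p \<in> region a1 a2 b1 b2 c1 c2" "X p < of_int a2" "Y p < of_int b2" "Sm p < of_int c2"
  shows "p \<in> \<Union>(cellsT a1 a2 b1 b2 c1 c2)"
proof -
  define i where "i = \<lfloor>X p\<rfloor>"
  define j where "j = \<lfloor>Y p\<rfloor>"
  define k where "k = (if Sm p < of_int (i + j + 1) then i + j else i + j + 1)"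
  have p: "p \<in> Pi" "of_int a1 \<le> X p" "of_int b1 \<le> Y p" "of_int c1 \<le> Sm p" using assms(1) by (auto simp: region_def)
  have xi: "of_int i \<le> X p" "X p < of_int i + 1" unfolding i_def by linarith+
  have yj: "of_int j \<le> Y p" "Y p < of_int j + 1" unfolding j_def by linarith+
  have sk: "of_int k \<le> Sm p" "Sm p \<le> of_int k + 1" "Sm p < of_int k + 1 \<or> Sm p < of_int c2"
    using xi yj assms(4) unfolding k_def Sm_def by auto
  have kk: "k = i + j \<or> k = i + j + 1" unfolding k_def by auto
  have b1: "a1 \<le> i" using p(2) unfolding i_def by (simp add: le_floor_iff)
  have b2: "i + 1 \<le> a2" using assms(2) unfolding i_def by (simp add: floor_less_iff add1_zle_eq)
  have b3: "b1 \<le> j" using p(3) unfolding j_def by (simp add: le_floor_iff)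
  have b4: "j + 1 \<le> b2" using assms(3) unfolding j_def by (simp add: floor_less_iff add1_zle_eq)
  have "real_of_int c1 < of_int k + 1" using p(4) xi yj unfolding k_def Sm_def
    by (auto split: if_splits)
  then have "real_of_int c1 < of_int (k + 1)" by simp
  then have b5: "c1 \<le> k" by linarith
  have "real_of_int k < of_int c2" using sk(1) assms(4) by linarith
  then have b6: "k + 1 \<le> c2" by linarith
  have "p \<in> cell i j k" unfolding cell_def strip_def using p(1) xi yj sk by auto
  moreover have "cell i j k \<in> cellsT a1 a2 b1 b2 c1 c2" unfolding cellsT_def using kk b1 b2 b3 b4 b5 b6 by blast
  ultimately show ?thesis by blast
qed

theorem GL:
  assumes "aff_dim (region a1 a2 b1 b2 c1 c2) = 2"
  shows "convex_polyiamond (region a1 a2 b1 b2 c1 c2)"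
proof -
  let ?R = "region a1 a2 b1 b2 c1 c2"
  let ?T = "cellsT a1 a2 b1 b2 c1 c2"
  obtain c where c: "c \<in> ?R" "X c < of_int a2" "Y c < of_int b2" "Sm c < of_int c2"
    using strict_point[OF assms] by blast
  have "\<forall>t\<in>?T. closed t"
  proof
    fix t assume "t \<in> ?T"
    then obtain i j k where "t = cell i j k" "k = i + j \<or> k = i + j + 1" unfolding cellsT_def by blast
    then show "closed t" using cell_compact compact_imp_closed by blast
  qed
  then have closedU: "closed (\<Union>?T)"
    by (rule closed_Union[OF cellsT_finite])
  have sub2: "?R \<subseteq> \<Union>?T"
  proof
    fix q assume q: "q \<in> ?R"
    show "q \<in> \<Union>?T"
    proof (rule ccontr)
      assume "q \<notin> \<Union>?T"
      moreover have "open (- \<Union>?T)" using closedU by (simp add: closed_def)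
      ultimately obtain e where e: "e > 0" "ball q e \<subseteq> - \<Union>?T"
        by (meson ComplI open_contains_ball)
      define d where "d = norm (c - q)"
      define t where "t = min (1/2) (e / (2 * (d + 1)))"
      have d0: "d \<ge> 0" unfolding d_def by simp
      have t0: "t > 0" "t \<le> 1" unfolding t_def using e d0 by auto
      have te: "t * (d + 1) \<le> e / 2"
      proof -
        have "t \<le> e / (2 * (d + 1))" unfolding t_def by simp
        then have "t * (2 * (d + 1)) \<le> e" using d0 by (simp add: pos_le_divide_eq)
        then show ?thesis by (simp add: algebra_simps)
      qed
      define qt where "qt = (1 - t) *\<^sub>R q + t *\<^sub>R c"
      have qtR: "qt \<in> ?R" unfolding qt_def by (rule convexD[OF convex_region q c(1)]) (use t0 in auto)
      have Xq: "X q \<le> of_int a2" "Y q \<le> of_int b2" "Sm q \<le> of_int c2" using q by (simp_all add: region_def)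
      have "X qt < of_int a2" unfolding qt_def X_comb[OF diff_add_cancel]
        by (rule conv_strict[OF Xq(1) c(2) t0])
      moreover have "Y qt < of_int b2" unfolding qt_def Y_comb[OF diff_add_cancel]
        by (rule conv_strict[OF Xq(2) c(3) t0])
      moreover have "Sm qt < of_int c2" unfolding qt_def Sm_comb[OF diff_add_cancel]
        by (rule conv_strict[OF Xq(3) c(4) t0])
      ultimately have "qt \<in> \<Union>?T" using strict_in_cells qtR by blast
      moreover have "dist q qt < e"
      proof -
        have "q - qt = t *\<^sub>R (q - c)" unfolding qt_def by (simp add: algebra_simps)
        then have "dist q qt = t * d" unfolding d_def dist_norm using t0 by (simp add: norm_minus_commute)
        also have "\<dots> \<le> t * (d + 1)" using t0 by simp
        also have "\<dots> < e" using te e by simp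
        finally show ?thesis .
      qed
      ultimately show False using e(2) by auto
    qed
  qed
  have U: "?R = \<Union>?T" using sub2 cellsT_sub by blast
  have Rne: "?R \<noteq> {}" using assms by auto
  have fin: "finite ?T" by (rule cellsT_finite)
  have ne: "?T \<noteq> {}" using Rne U by auto
  have unit: "\<forall>t\<in>?T. unit_triangle t"
  proof
    fix t assume "t \<in> ?T"
    then obtain i j k where "t = cell i j k" "k = i + j \<or> k = i + j + 1" unfolding cellsT_def by blast
    then show "unit_triangle t" using unit_cell by blast
  qed
  have face: "\<forall>t1\<in>?T. \<forall>t2\<in>?T. t1 \<noteq> t2 \<longrightarrow> t1 \<inter> t2 face_of t1 \<and> t1 \<inter> t2 face_of t2"
  proof (intro ballI impI conjI)
    fix t1 t2 assume "t1 \<in> ?T" "t2 \<in> ?T"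
    then obtain i j k i' j' k' where "t1 = cell i j k" "t2 = cell i' j' k'" unfolding cellsT_def by blast
    then show "t1 \<inter> t2 face_of t1" "t1 \<inter> t2 face_of t2"
      using cell_Int_face[of i j k i' j' k'] cell_Int_face[of i' j' k' i j k] by (simp_all add: inf_commute)
  qed
  have "polyiamond ?R" unfolding polyiamond_def
    apply (rule conjI[OF assms])
    apply (rule exI[of _ ?T])
    using fin ne unit U face by (intro conjI)
  then show ?thesis unfolding convex_polyiamond_def using convex_region by blast
qed

end



lemma unit_tri_indep:
  fixes a b c :: "real^3"
  assumes "dist a b = 1" "dist b c = 1" "dist a c = 1"
  shows "\<not> affine_dependent {a,b,c}"
proof
  assume dep: "affine_dependent {a,b,c}"
  then have "collinear {a,b,c}" using collinear_3_eq_affine_dependent by blast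
  then have "collinear {0, a - b, c - b}" by (simp add: collinear_3)
  moreover have "a - b \<noteq> 0" "c - b \<noteq> 0" using assms by (auto simp: dist_norm)
  ultimately obtain k where k: "c - b = k *\<^sub>R (a - b)" using collinear_lemma by blast
  have nab: "norm (a - b) = 1" using assms by (simp add: dist_norm)
  have "norm (c - b) = 1" using assms by (simp add: dist_norm norm_minus_commute)
  then have "\<bar>k\<bar> = 1" using k nab by simp
  have "c - a = (k - 1) *\<^sub>R (a - b)" using k by (simp add: algebra_simps)
  moreover have "norm (c - a) = 1" using assms(3) by (simp add: dist_norm norm_minus_commute)
  ultimately have "\<bar>k - 1\<bar> = 1" using nab by simp
  then show False using \<open>\<bar>k\<bar> = 1\<close> by linarith
qed

lemma tri_facts:
  assumes "unit_triangle t"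
  shows "\<exists>a b c. t = convex hull {a,b,c} \<and> dist a b = 1 \<and> dist b c = 1 \<and> dist a c = 1
     \<and> \<not> affine_dependent {a,b,c} \<and> {x. x extreme_point_of t} = {a,b,c}"
proof -
  obtain a b c where abc: "t = convex hull {a,b,c}" "dist a b = 1" "dist b c = 1" "dist a c = 1"
    using assms unfolding unit_triangle_def by blast
  have ind: "\<not> affine_dependent {a,b,c}" using unit_tri_indep abc by blast
  have "{x. x extreme_point_of t} = {a,b,c}"
    using extreme_point_of_convex_hull_affine_independent[OF ind] abc(1) by blast
  then show ?thesis using abc ind by blast
qed

lemma tri_dist:
  assumes "dist a b = 1" "dist b c = 1" "dist a c = 1" "x \<in> {a,b,c}" "y \<in> {a,b,c}" "x \<noteq> y"
  shows "dist x y = 1"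
proof -
  have x: "x = a \<or> x = b \<or> x = c" and y: "y = a \<or> y = b \<or> y = c" using assms(4,5) by auto
  have d: "dist b a = 1" "dist c b = 1" "dist c a = 1" using assms(1-3) by (simp_all add: dist_commute)
  from x y show ?thesis using assms(1-3,6) d by (elim disjE) simp_all
qed

lemma face_two_verts:
  fixes S :: "'a::euclidean_space set"
  assumes ind: "\<not> affine_dependent S" and F: "F face_of convex hull S"
  shows "F \<subseteq> S \<or> (\<exists>v1 v2. v1 \<in> S \<and> v2 \<in> S \<and> v1 \<noteq> v2 \<and> v1 \<in> F \<and> v2 \<in> F
            \<and> v1 extreme_point_of F \<and> v2 extreme_point_of F)"
proof -
  obtain C where C: "C \<subseteq> S" "F = convex hull C"
    using face_of_convex_hull_affine_independent[OF ind, THEN iffD1, OF F] by blast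
  have indC: "\<not> affine_dependent C" using affine_independent_subset[OF ind C(1)] .
  show ?thesis
  proof (cases "\<exists>v1 v2. v1 \<in> C \<and> v2 \<in> C \<and> v1 \<noteq> v2")
    case True
    then obtain v1 v2 where v: "v1 \<in> C" "v2 \<in> C" "v1 \<noteq> v2" by blast
    have "v1 extreme_point_of F" "v2 extreme_point_of F" unfolding C(2)
      using extreme_point_of_convex_hull_affine_independent[OF indC] v by simp_all
    moreover have "v1 \<in> F" "v2 \<in> F" unfolding C(2) using v hull_subset[of C convex] by auto
    ultimately show ?thesis using v C(1) by blast
  next
    case False
    then have all: "\<forall>v1\<in>C. \<forall>v2\<in>C. v1 = v2" by blast
    have "F = C"
    proof (cases "C = {}")
      case True then show ?thesis using C(2) by simp
    next
      case False
      then obtain v where v: "v \<in> C" by blast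
      then have "C = {v}" using all by blast
      then show ?thesis using C(2) by simp
    qed
    then show ?thesis using C(1) by blast
  qed
qed

lemma third_vertex_real:
  fixes I J \<alpha> \<beta> :: real
  assumes "Qf I J = 1" "Qf \<alpha> \<beta> = 1" "Qf (\<alpha> - I) (\<beta> - J) = 1"
  shows "(\<alpha> = -J \<and> \<beta> = I + J) \<or> (\<alpha> = I + J \<and> \<beta> = -I)"
proof -
  define E where "E = 2*\<alpha>*I + \<alpha>*J + \<beta>*I + 2*\<beta>*J"
  define D where "D = \<alpha>*J - \<beta>*I"
  have "Qf (\<alpha> - I) (\<beta> - J) = Qf \<alpha> \<beta> - E + Qf I J" by (simp add: Qf_def E_def algebra_simps)
  then have E1: "E = 1" using assms by linarith
  have "E^2 + 3*D^2 = 4 * Qf \<alpha> \<beta> * Qf I J" by (simp add: Qf_def E_def D_def power2_eq_square algebra_simps)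
  then have "D^2 = 1" using assms E1 by simp
  then have D1: "D = 1 \<or> D = -1" by (simp add: power2_eq_1_iff)
  have a2: "2*\<alpha>*Qf I J = I*E + (I + 2*J)*D" by (simp add: Qf_def E_def D_def algebra_simps)
  have b2: "2*\<beta>*Qf I J = J*E - (2*I + J)*D" by (simp add: Qf_def E_def D_def algebra_simps)
  from D1 show ?thesis
  proof
    assume "D = 1"
    then have "2*\<alpha> = 2*(I + J)" "2*\<beta> = 2*(-I)" using a2 b2 assms(1) E1 by (simp_all add: algebra_simps)
    then show ?thesis by simp
  next
    assume "D = -1"
    then have "2*\<alpha> = 2*(-J)" "2*\<beta> = 2*(I + J)" using a2 b2 assms(1) E1 by (simp_all add: algebra_simps)
    then show ?thesis by simp
  qed
qed

lemma six_dirs: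
  fixes I J :: int
  assumes "Qf (of_int I) (of_int J) = 1"
  shows "(J = 0 \<and> I \<noteq> 0) \<or> (I = 0 \<and> J \<noteq> 0) \<or> (I = -J \<and> I \<noteq> 0)"
proof -
  have q: "I*I + I*J + J*J = 1"
  proof -
    have "real_of_int (I*I + I*J + J*J) = 1" using assms by (simp add: Qf_def)
    then show ?thesis by linarith
  qed
  have e4: "(2*I + J)*(2*I+J) + 3*(J*J) = 4" using q by (simp add: algebra_simps)
  have e4': "(2*J + I)*(2*J+I) + 3*(I*I) = 4" using q by (simp add: algebra_simps)
  have "3*(J*J) \<le> 4" using e4 by (smt (verit) zero_le_square)
  then have jb: "J*J \<le> 1" by linarith
  have "3*(I*I) \<le> 4" using e4' by (smt (verit) zero_le_square)
  then have ib: "I*I \<le> 1" by linarith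
  have "\<bar>J\<bar> \<le> 1"
  proof (rule ccontr)
    assume "\<not> \<bar>J\<bar> \<le> 1"
    then have "2 \<le> \<bar>J\<bar>" by linarith
    then have "2*2 \<le> \<bar>J\<bar>*\<bar>J\<bar>" by (intro mult_mono) auto
    then show False using jb by (simp add: abs_mult[symmetric])
  qed
  moreover have "\<bar>I\<bar> \<le> 1"
  proof (rule ccontr)
    assume "\<not> \<bar>I\<bar> \<le> 1"
    then have "2 \<le> \<bar>I\<bar>" by linarith
    then have "2*2 \<le> \<bar>I\<bar>*\<bar>I\<bar>" by (intro mult_mono) auto
    then show False using ib by (simp add: abs_mult[symmetric])
  qed
  ultimately have "I \<in> {-1,0,1}" "J \<in> {-1,0,1}" by auto
  then show ?thesis using q by auto
qed

lemma interp_le: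
  fixes c0 c1 lmin lmax lz b :: real
  assumes "c0 + c1 * lmin \<le> b" "c0 + c1 * lmax \<le> b" "lmin \<le> lz" "lz \<le> lmax"
  shows "c0 + c1 * lz \<le> b"
proof (cases "c1 \<ge> 0")
  case True
  then have "c1 * lz \<le> c1 * lmax" using assms by (intro mult_left_mono) auto
  then show ?thesis using assms by linarith
next
  case False
  then have "c1 * lz \<le> c1 * lmin" using assms by (intro mult_left_mono_neg) auto
  then show ?thesis using assms by linarith
qed

context tb
begin

definition Lat :: "(real^3) set" where "Lat = {B (of_int i) (of_int j) | i j. True}"

lemma Lat_Pi: "Lat \<subseteq> Pi" by (auto simp: Lat_def)

lemma Lat_X: "v \<in> Lat \<Longrightarrow> X v \<in> \<int>" by (auto simp: Lat_def)
lemma Lat_Y: "v \<in> Lat \<Longrightarrow> Y v \<in> \<int>" by (auto simp: Lat_def)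
lemma Lat_Sm: "v \<in> Lat \<Longrightarrow> Sm v \<in> \<int>" by (auto simp: Lat_def)

lemma third_vertex:
  assumes "p \<in> Lat" "q \<in> Lat" "r \<in> Pi" "dist p q = 1" "dist r p = 1" "dist r q = 1"
  shows "r \<in> Lat"
proof -
  obtain i1 j1 where p: "p = B (of_int i1) (of_int j1)" using assms(1) by (auto simp: Lat_def)
  obtain i2 j2 where q: "q = B (of_int i2) (of_int j2)" using assms(2) by (auto simp: Lat_def)
  have r: "r = B (X r) (Y r)" using assms(3) Pi_B by blast
  have h1: "Qf (of_int (i2 - i1)) (of_int (j2 - j1)) = 1"
    using dist_B[of "of_int i2" "of_int j2" "of_int i1" "of_int j1"] assms(4) p q by (simp add: dist_commute)
  have h2: "Qf (X r - of_int i1) (Y r - of_int j1) = 1"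
    using dist_B[of "X r" "Y r" "of_int i1" "of_int j1"] assms(5) p r[symmetric] by simp
  have h3: "Qf ((X r - of_int i1) - of_int (i2 - i1)) ((Y r - of_int j1) - of_int (j2 - j1)) = 1"
    using dist_B[of "X r" "Y r" "of_int i2" "of_int j2"] assms(6) q r[symmetric] by (simp add: algebra_simps)
  from third_vertex_real[OF h1 h2 h3]
  have "(X r = of_int (i1 - (j2 - j1)) \<and> Y r = of_int (j1 + (i2 - i1) + (j2 - j1))) \<or>
        (X r = of_int (i1 + (i2 - i1) + (j2 - j1)) \<and> Y r = of_int (j1 - (i2 - i1)))"
    by auto
  then show ?thesis using r unfolding Lat_def by (metis (mono_tags, lifting) mem_Collect_eq)
qed

lemma dot_Pi: "p \<in> Pi \<Longrightarrow> g \<bullet> p = g \<bullet> p0 + X p * (g \<bullet> u) + Y p * (g \<bullet> w)"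
proof -
  assume "p \<in> Pi"
  then have "p = B (X p) (Y p)" by (rule Pi_B)
  then have "g \<bullet> p = g \<bullet> B (X p) (Y p)" by (rule arg_cong)
  also have "\<dots> = g \<bullet> p0 + X p * (g \<bullet> u) + Y p * (g \<bullet> w)" by (simp add: B_def inner_add_right)
  finally show ?thesis .
qed

lemma Pi_affine_hull: "Pi = affine hull {p0, B 1 0, B 0 1}"
proof
  show "Pi \<subseteq> affine hull {p0, B 1 0, B 0 1}"
  proof
    fix p assume "p \<in> Pi"
    then obtain x y where p: "p = B x y" by (auto simp: Pi_def)
    have "p = (1 - x - y) *\<^sub>R p0 + x *\<^sub>R B 1 0 + y *\<^sub>R B 0 1"
      unfolding p B_def by (simp add: algebra_simps)
    moreover have "(1 - x - y) + x + y = 1" by simp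
    ultimately show "p \<in> affine hull {p0, B 1 0, B 0 1}" unfolding affine_hull_3 by blast
  qed
next
  show "affine hull {p0, B 1 0, B 0 1} \<subseteq> Pi"
  proof
    fix p assume "p \<in> affine hull {p0, B 1 0, B 0 1}"
    then obtain \<alpha> \<beta> \<gamma> where "p = \<alpha> *\<^sub>R p0 + \<beta> *\<^sub>R B 1 0 + \<gamma> *\<^sub>R B 0 1" "\<alpha> + \<beta> + \<gamma> = 1"
      unfolding affine_hull_3 by blast
    then have "p = \<alpha> *\<^sub>R B 0 0 + \<beta> *\<^sub>R B 1 0 + \<gamma> *\<^sub>R B 0 1" "\<alpha> + \<beta> + \<gamma> = 1" by (simp_all add: B_def)
    then show "p \<in> Pi" using B_comb3 by simp
  qed
qed

end



context tb
begin

lemma lin_bound: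
  assumes "\<forall>p\<in>Pi. g \<bullet> p = c0 + c1 * l p" "vmin \<in> Pi" "vmax \<in> Pi" "g \<bullet> vmin \<le> b" "g \<bullet> vmax \<le> b"
    "l vmin \<le> l z" "l z \<le> l vmax" "z \<in> Pi"
  shows "g \<bullet> z \<le> b"
proof -
  have "c0 + c1 * l vmin \<le> b" "c0 + c1 * l vmax \<le> b" using assms by auto
  then have "c0 + c1 * l z \<le> b" using assms(6,7) by (rule interp_le)
  then show ?thesis using assms(1,8) by auto
qed

lemma Lat_B: "v \<in> Lat \<Longrightarrow> \<exists>i j. v = B (of_int i) (of_int j)" by (auto simp: Lat_def)

end

lemma infinite_tri:
  fixes a b c :: "real^3"
  assumes "a \<noteq> b"
  shows "infinite (convex hull {a,b,c})"
proof
  assume "finite (convex hull {a,b,c})"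
  moreover have "closed_segment a b \<subseteq> convex hull {a,b,c}"
    unfolding segment_convex_hull by (rule hull_mono) auto
  ultimately have "finite (closed_segment a b)" by (rule finite_subset[rotated])
  then show False using assms by simp
qed

lemma convex_polyiamond_char:
  assumes "convex_polyiamond P"
  shows "\<exists>p0 u w a1 a2 b1 b2 c1 c2. tb u w \<and> P = tb.region p0 u w a1 a2 b1 b2 c1 c2"
proof -
  have cvx: "convex P" and ad: "aff_dim P = 2" using assms
    unfolding convex_polyiamond_def polyiamond_def by auto
  obtain T where fin: "finite T" and ne: "T \<noteq> {}" and ut: "\<forall>t\<in>T. unit_triangle t" and PU: "P = \<Union>T"
    and ff: "\<forall>t1\<in>T. \<forall>t2\<in>T. t1 \<noteq> t2 \<longrightarrow> (t1 \<inter> t2) face_of t1 \<and> (t1 \<inter> t2) face_of t2"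
    using assms unfolding convex_polyiamond_def polyiamond_def by blast
  obtain t0 where t0: "t0 \<in> T" using ne by blast
  obtain a b c where abc: "t0 = convex hull {a,b,c}" "dist a b = 1" "dist b c = 1" "dist a c = 1"
    using ut t0 unfolding unit_triangle_def by blast
  define u where "u = b - a"
  define w where "w = c - a"
  have uu: "u \<bullet> u = 1" using abc(2) unfolding u_def
    by (metis dist_norm norm_minus_commute power2_norm_eq_inner power_one)
  have ww: "w \<bullet> w = 1" using abc(4) unfolding w_def
    by (metis dist_norm norm_minus_commute power2_norm_eq_inner power_one)
  have "(u - w) \<bullet> (u - w) = 1" using abc(3) unfolding u_def w_def
    by (metis (no_types, lifting) diff_diff_eq2 diff_add_cancel dist_norm power2_norm_eq_inner power_one add_diff_cancel_left)
  then have uw: "u \<bullet> w = 1/2" using uu ww by (simp add: inner_diff_left inner_diff_right inner_commute)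
  interpret tb a u w using uu ww uw by unfold_locales
  have Ba: "B 0 0 = a" "B 1 0 = b" "B 0 1 = c" unfolding B_def by (simp_all add: u_def w_def)
  have indabc: "\<not> affine_dependent {a,b,c}" using unit_tri_indep abc by blast
  have dabc: "a \<noteq> b" "b \<noteq> c" "a \<noteq> c" using abc by auto
  have "of_nat (card {a,b,c}) = aff_dim {a,b,c} + 1" using aff_dim_affine_independent[OF indabc] .
  moreover have "card {a,b,c} = 3" using dabc by auto
  ultimately have adabc: "aff_dim {a,b,c} = 2" by simp
  have tP: "\<And>t. t \<in> T \<Longrightarrow> t \<subseteq> P" using PU by blast
  have sub0: "{a,b,c} \<subseteq> P" using tP[OF t0] abc(1) hull_subset[of "{a,b,c}" convex] by blast
  have "affine hull {a,b,c} = affine hull P"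
    by (rule affine_dim_equal) (auto simp: adabc ad hull_mono[OF sub0])
  then have hullP: "affine hull P = Pi" using Pi_affine_hull Ba by simp
  have PPi: "P \<subseteq> Pi" using hullP hull_subset[of P affine] by blast
  define VT :: "(real^3) set \<Rightarrow> (real^3) set" where "VT t = {x. x extreme_point_of t}" for t
  have tf: "\<And>t. t \<in> T \<Longrightarrow> \<exists>a' b' c'. t = convex hull {a',b',c'} \<and> dist a' b' = 1 \<and> dist b' c' = 1 \<and> dist a' c' = 1
     \<and> \<not> affine_dependent {a',b',c'} \<and> VT t = {a',b',c'}"
    unfolding VT_def using ut tri_facts by blast
  have VTt: "\<And>t. VT t \<subseteq> t" unfolding VT_def extreme_point_of_def by blast
  define V where "V = \<Union>(VT ` T)"
  have finV: "finite V" unfolding V_def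
  proof (rule finite_Union)
    show "finite (VT ` T)" using fin by simp
    show "\<And>M. M \<in> VT ` T \<Longrightarrow> finite M" using tf by fastforce
  qed
  have VT0: "VT t0 = {a,b,c}"
    using extreme_point_of_convex_hull_affine_independent[OF indabc] abc(1) unfolding VT_def by auto
  have abcL: "{a,b,c} \<subseteq> Lat"
  proof -
    have "B (of_int 0) (of_int 0) \<in> Lat" "B (of_int 1) (of_int 0) \<in> Lat" "B (of_int 0) (of_int 1) \<in> Lat"
      unfolding Lat_def by blast+
    then show ?thesis using Ba by simp
  qed
  have closedT: "\<And>t. t \<in> T \<Longrightarrow> closed t"
  proof -
    fix t assume "t \<in> T"
    then obtain a' b' c' where "t = convex hull {a',b',c'}" using tf by blast
    then show "closed t" by (simp add: compact_imp_closed finite_imp_compact_convex_hull)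
  qed
  have infT: "\<And>t. t \<in> T \<Longrightarrow> \<exists>z\<in>t. z \<notin> V"
  proof -
    fix t assume tT: "t \<in> T"
    then obtain a' b' c' where t: "t = convex hull {a',b',c'}" "dist a' b' = 1" using tf by blast
    have "a' \<noteq> b'"
    proof
      assume "a' = b'" then show False using t(2) by simp
    qed
    then have inf: "infinite t" using infinite_tri[of a' b' c'] t(1) by simp
    show "\<exists>z\<in>t. z \<notin> V"
    proof (rule ccontr)
      assume "\<not> (\<exists>z\<in>t. z \<notin> V)"
      then have "t \<subseteq> V" by blast
      then show False using finV inf finite_subset by blast
    qed
  qed
  have allL: "\<forall>t\<in>T. VT t \<subseteq> Lat"
  proof (rule ccontr)
    assume "\<not> (\<forall>t\<in>T. VT t \<subseteq> Lat)"
    then obtain t2' where t2': "t2' \<in> T" "\<not> VT t2' \<subseteq> Lat" by blast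
    define TL where "TL = {t\<in>T. VT t \<subseteq> Lat}"
    define TN where "TN = {t\<in>T. \<not> VT t \<subseteq> Lat}"
    have cL: "closed (\<Union>TL)" by (rule closed_Union) (use fin closedT in \<open>auto simp: TL_def\<close>)
    have cN: "closed (\<Union>TN)" by (rule closed_Union) (use fin closedT in \<open>auto simp: TN_def\<close>)
    have "\<not> collinear P" using ad by (simp add: collinear_aff_dim)
    then have conn: "connected (P - V)"
      using connected_convex_diff_countable[OF cvx _ countable_finite[OF finV]] by blast
    define E1 where "E1 = (P - V) \<inter> \<Union>TL"
    define E2 where "E2 = (P - V) \<inter> \<Union>TN"
    have ce1: "closedin (top_of_set (P - V)) E1" unfolding E1_def by (rule closedin_closed_Int[OF cL])
    have ce2: "closedin (top_of_set (P - V)) E2" unfolding E2_def by (rule closedin_closed_Int[OF cN])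
    have cover: "P - V \<subseteq> E1 \<union> E2" unfolding E1_def E2_def TL_def TN_def using PU by blast
    have "t0 \<in> TL" unfolding TL_def using t0 VT0 abcL by simp
    then have ne1: "E1 \<noteq> {}" unfolding E1_def using infT[OF t0] tP[OF t0] by blast
    have "t2' \<in> TN" unfolding TN_def using t2' by simp
    then have ne2: "E2 \<noteq> {}" unfolding E2_def using infT[OF t2'(1)] tP[OF t2'(1)] by blast
    have "E1 \<inter> E2 \<noteq> {}" using conn ce1 ce2 cover ne1 ne2 unfolding connected_closedin by blast
    then obtain z t1 t2 where z: "z \<notin> V" "z \<in> t1" "t1 \<in> TL" "z \<in> t2" "t2 \<in> TN"
      unfolding E1_def E2_def by blast
    have t12: "t1 \<in> T" "t2 \<in> T" "VT t1 \<subseteq> Lat" "\<not> VT t2 \<subseteq> Lat" using z unfolding TL_def TN_def by auto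
    then have "t1 \<noteq> t2" by auto
    then have F1: "(t1 \<inter> t2) face_of t1" and F2: "(t1 \<inter> t2) face_of t2" using ff t12 by auto
    obtain a2 b2 c2 where t2: "t2 = convex hull {a2,b2,c2}" "dist a2 b2 = 1" "dist b2 c2 = 1" "dist a2 c2 = 1"
      "\<not> affine_dependent {a2,b2,c2}" "VT t2 = {a2,b2,c2}" using tf[OF t12(2)] by blast
    have F2': "(t1 \<inter> t2) face_of convex hull {a2,b2,c2}" using F2 t2(1) by simp
    have VTV: "VT t2 \<subseteq> V" unfolding V_def using t12(2) by blast
    have "\<not> (t1 \<inter> t2 \<subseteq> {a2,b2,c2})" using z VTV t2(6) by blast
    then obtain v1 v2 where v: "v1 \<in> {a2,b2,c2}" "v2 \<in> {a2,b2,c2}" "v1 \<noteq> v2" "v1 extreme_point_of (t1 \<inter> t2)"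
        "v2 extreme_point_of (t1 \<inter> t2)"
      using face_two_verts[OF t2(5) F2'] by blast
    have "v1 extreme_point_of t1" "v2 extreme_point_of t1"
      using v(4,5) extreme_point_of_face[OF F1] by blast+
    then have vL: "v1 \<in> Lat" "v2 \<in> Lat" using t12(3) unfolding VT_def by blast+
    have d12: "dist v1 v2 = 1" using tri_dist[OF t2(2-4) v(1-3)] .
    have "{a2,b2,c2} \<subseteq> Lat"
    proof
      fix x assume x: "x \<in> {a2,b2,c2}"
      show "x \<in> Lat"
      proof (cases "x = v1 \<or> x = v2")
        case True then show ?thesis using vL by blast
      next
        case False
        have xPi: "x \<in> Pi" using x t2(1) hull_subset[of "{a2,b2,c2}" convex] tP[OF t12(2)] PPi by blast
        have "dist x v1 = 1" "dist x v2 = 1" using tri_dist[OF t2(2-4)] x v(1,2) False by blast+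
        then show ?thesis using third_vertex[OF vL(1) vL(2) xPi d12] by blast
      qed
    qed
    then show False using t12(4) t2(6) by simp
  qed
  have VL: "V \<subseteq> Lat" unfolding V_def using allL by blast
  have VP: "V \<subseteq> P" unfolding V_def using VTt tP by blast
  have Vne: "V \<noteq> {}" unfolding V_def using t0 VT0 by blast
  have Pconv: "P = convex hull V"
  proof
    show "P \<subseteq> convex hull V"
    proof
      fix p assume "p \<in> P"
      then obtain t where t: "t \<in> T" "p \<in> t" using PU by blast
      then obtain a' b' c' where "t = convex hull {a',b',c'}" "VT t = {a',b',c'}" using tf by blast
      then have "t = convex hull (VT t)" by simp
      also have "\<dots> \<subseteq> convex hull V" by (rule hull_mono) (use t(1) in \<open>auto simp: V_def\<close>)
      finally show "p \<in> convex hull V" using t(2) by blast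
    qed
    show "convex hull V \<subseteq> P" by (rule hull_minimal[where S=convex, OF VP cvx])
  qed
  have intval: "\<And>f :: real^3 \<Rightarrow> real. (\<And>v. v \<in> V \<Longrightarrow> f v \<in> \<int>) \<Longrightarrow> \<exists>k::int. of_int k = Min (f ` V) \<and> (\<exists>v\<in>V. f v = of_int k) \<and> (\<forall>v\<in>V. of_int k \<le> f v)"
  proof -
    fix f :: "real^3 \<Rightarrow> real" assume h: "\<And>v. v \<in> V \<Longrightarrow> f v \<in> \<int>"
    have "Min (f ` V) \<in> f ` V" using finV Vne by simp
    then obtain v where v: "v \<in> V" "Min (f ` V) = f v" by auto
    obtain k where "f v = of_int k" using h[OF v(1)] Ints_cases by blast
    moreover have "\<forall>v'\<in>V. Min (f ` V) \<le> f v'" using finV by simp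
    ultimately show "\<exists>k::int. of_int k = Min (f ` V) \<and> (\<exists>v\<in>V. f v = of_int k) \<and> (\<forall>v\<in>V. of_int k \<le> f v)"
      using v by metis
  qed
  have intvalM: "\<And>f :: real^3 \<Rightarrow> real. (\<And>v. v \<in> V \<Longrightarrow> f v \<in> \<int>) \<Longrightarrow> \<exists>k::int. (\<exists>v\<in>V. f v = of_int k) \<and> (\<forall>v\<in>V. f v \<le> of_int k)"
  proof -
    fix f :: "real^3 \<Rightarrow> real" assume h: "\<And>v. v \<in> V \<Longrightarrow> f v \<in> \<int>"
    have "Max (f ` V) \<in> f ` V" using finV Vne by simp
    then obtain v where v: "v \<in> V" "Max (f ` V) = f v" by auto
    obtain k where "f v = of_int k" using h[OF v(1)] Ints_cases by blast
    moreover have "\<forall>v'\<in>V. f v' \<le> Max (f ` V)" using finV by simp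
    ultimately show "\<exists>k::int. (\<exists>v\<in>V. f v = of_int k) \<and> (\<forall>v\<in>V. f v \<le> of_int k)"
      using v by metis
  qed
  have XI: "\<And>v. v \<in> V \<Longrightarrow> X v \<in> \<int>" using VL Lat_X by blast
  have YI: "\<And>v. v \<in> V \<Longrightarrow> Y v \<in> \<int>" using VL Lat_Y by blast
  have SI: "\<And>v. v \<in> V \<Longrightarrow> Sm v \<in> \<int>" using VL Lat_Sm by blast
  obtain a1 where a1: "\<exists>v\<in>V. X v = of_int a1" "\<forall>v\<in>V. of_int a1 \<le> X v" using intval[of X, OF XI] by blast
  obtain a2 where a2: "\<exists>v\<in>V. X v = of_int a2" "\<forall>v\<in>V. X v \<le> of_int a2" using intvalM[of X, OF XI] by blast
  obtain b1 where b1: "\<exists>v\<in>V. Y v = of_int b1" "\<forall>v\<in>V. of_int b1 \<le> Y v" using intval[of Y, OF YI] by blast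
  obtain b2 where b2: "\<exists>v\<in>V. Y v = of_int b2" "\<forall>v\<in>V. Y v \<le> of_int b2" using intvalM[of Y, OF YI] by blast
  obtain c1 where c1: "\<exists>v\<in>V. Sm v = of_int c1" "\<forall>v\<in>V. of_int c1 \<le> Sm v" using intval[of Sm, OF SI] by blast
  obtain c2 where c2: "\<exists>v\<in>V. Sm v = of_int c2" "\<forall>v\<in>V. Sm v \<le> of_int c2" using intvalM[of Sm, OF SI] by blast
  define R where "R = region a1 a2 b1 b2 c1 c2"
  have VR: "V \<subseteq> R" unfolding R_def region_def using VL Lat_Pi a1 a2 b1 b2 c1 c2 by blast
  have PR: "P \<subseteq> R" unfolding Pconv R_def by (rule hull_minimal[where S=convex, OF VR[unfolded R_def] convex_region])
  have polyP: "polyhedron P" using Pconv finV polytope_def polytope_imp_polyhedron by blast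
  obtain F where Ffin: "finite F" and seq: "P = affine hull P \<inter> \<Inter>F"
    and Fh: "\<forall>h\<in>F. \<exists>a b. a \<noteq> 0 \<and> h = {x. a \<bullet> x \<le> b}"
    and min: "\<forall>F'. F' \<subset> F \<longrightarrow> P \<subset> affine hull P \<inter> \<Inter>F'"
    using polyP unfolding polyhedron_Int_affine_minimal by blast
  obtain ah bh where ab: "\<And>h. h \<in> F \<Longrightarrow> ah h \<noteq> 0 \<and> h = {x. ah h \<bullet> x \<le> bh h}" using Fh by metis
  have facet: "\<And>h. h \<in> F \<Longrightarrow> (P \<inter> {x. ah h \<bullet> x = bh h}) facet_of P"
    using facet_of_polyhedron_explicit[OF Ffin seq ab] min by blast
  have RP: "R \<subseteq> P"
  proof
    fix z assume zR: "z \<in> R"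
    have zPi: "z \<in> Pi" using zR unfolding R_def region_def by blast
    have "z \<in> h" if hF: "h \<in> F" for h
    proof -
      define g where "g = ah h"
      define bb where "bb = bh h"
      have hh: "h = {x. g \<bullet> x \<le> bb}" using ab[OF hF] unfolding g_def bb_def by blast
      have Ph: "\<And>p. p \<in> P \<Longrightarrow> g \<bullet> p \<le> bb" using seq hF hh by blast
      define E where "E = P \<inter> {x. g \<bullet> x = bb}"
      have Ef: "E facet_of P" using facet[OF hF] unfolding E_def g_def bb_def .
      then have adE: "aff_dim E = 1" and Ene: "E \<noteq> {}" and cE: "convex E" using ad
        by (auto simp: facet_of_def face_of_imp_convex)
      obtain e1 where e1: "e1 \<in> E" using Ene by blast
      have "E \<noteq> {e1}" using adE by auto
      then obtain e2 where e2: "e2 \<in> E" "e2 \<noteq> e1" using e1 by blast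
      have "closed_segment e1 e2 \<subseteq> E" using cE e1 e2(1) convex_contains_segment by blast
      then have infE: "infinite E" using e2(2) finite_subset by fastforce
      have "E = (\<Union>t\<in>T. t \<inter> {x. g \<bullet> x = bb})" unfolding E_def using PU by blast
      then obtain t where tT: "t \<in> T" and inft: "infinite (t \<inter> {x. g \<bullet> x = bb})"
        using infE fin by (metis finite_UN)
      obtain a' b' c' where t: "t = convex hull {a',b',c'}" "dist a' b' = 1" "dist b' c' = 1" "dist a' c' = 1"
        "\<not> affine_dependent {a',b',c'}" "VT t = {a',b',c'}" using tf[OF tT] by blast
      have cvt: "convex t" using t(1) by simp
      have ft: "(t \<inter> {x. g \<bullet> x = bb}) face_of t"
        by (rule face_of_Int_supporting_hyperplane_le[OF cvt]) (use tP[OF tT] Ph in blast)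
      have ft': "(t \<inter> {x. g \<bullet> x = bb}) face_of convex hull {a',b',c'}" using ft t(1) by simp
      have "\<not> (t \<inter> {x. g \<bullet> x = bb} \<subseteq> {a',b',c'})" using inft finite_subset by blast
      then obtain v1 v2 where v: "v1 \<in> {a',b',c'}" "v2 \<in> {a',b',c'}" "v1 \<noteq> v2"
          "v1 \<in> t \<inter> {x. g \<bullet> x = bb}" "v2 \<in> t \<inter> {x. g \<bullet> x = bb}"
        using face_two_verts[OF t(5) ft'] by blast
      have vL: "v1 \<in> Lat" "v2 \<in> Lat" using v(1,2) t(6) allL tT by blast+
      have d12: "dist v1 v2 = 1" using tri_dist[OF t(2-4) v(1-3)] .
      obtain i1 j1 where v1: "v1 = B (of_int i1) (of_int j1)" using Lat_B[OF vL(1)] by blast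
      obtain i2 j2 where v2: "v2 = B (of_int i2) (of_int j2)" using Lat_B[OF vL(2)] by blast
      have Q: "Qf (of_int (i2 - i1)) (of_int (j2 - j1)) = 1"
        using dist_B[of "of_int i2" "of_int j2" "of_int i1" "of_int j1"] d12 v1 v2 by (simp add: dist_commute)
      have gv1: "g \<bullet> v1 = g \<bullet> a + of_int i1 * (g \<bullet> u) + of_int j1 * (g \<bullet> w)" using dot_Pi[of v1 g] v1 by simp
      have gv2: "g \<bullet> v2 = g \<bullet> a + of_int i2 * (g \<bullet> u) + of_int j2 * (g \<bullet> w)" using dot_Pi[of v2 g] v2 by simp
      have dir: "of_int (i2 - i1) * (g \<bullet> u) + of_int (j2 - j1) * (g \<bullet> w) = 0"
        using gv1 gv2 v(4,5) by (simp add: algebra_simps)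
      obtain vx1 where vx1: "vx1 \<in> V" "X vx1 = of_int a1" using a1 by blast
      obtain vx2 where vx2: "vx2 \<in> V" "X vx2 = of_int a2" using a2 by blast
      obtain vy1 where vy1: "vy1 \<in> V" "Y vy1 = of_int b1" using b1 by blast
      obtain vy2 where vy2: "vy2 \<in> V" "Y vy2 = of_int b2" using b2 by blast
      obtain vs1 where vs1: "vs1 \<in> V" "Sm vs1 = of_int c1" using c1 by blast
      obtain vs2 where vs2: "vs2 \<in> V" "Sm vs2 = of_int c2" using c2 by blast
      have VPi: "\<And>v. v \<in> V \<Longrightarrow> v \<in> Pi" using VL Lat_Pi by blast
      have Vg: "\<And>v. v \<in> V \<Longrightarrow> g \<bullet> v \<le> bb" using VP Ph by blast
      have zb: "of_int a1 \<le> X z" "X z \<le> of_int a2" "of_int b1 \<le> Y z" "Y z \<le> of_int b2"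
        "of_int c1 \<le> Sm z" "Sm z \<le> of_int c2" using zR unfolding R_def region_def by auto
      have "g \<bullet> z \<le> bb"
        using six_dirs[OF Q]
      proof (elim disjE conjE)
        assume "i2 - i1 \<noteq> 0" "j2 - j1 = 0"
        then have gu: "g \<bullet> u = 0" using dir by simp
        have "\<forall>p\<in>Pi. g \<bullet> p = g \<bullet> a + (g \<bullet> w) * Y p" using dot_Pi gu by (simp add: mult.commute)
        then show ?thesis
          by (rule lin_bound[OF _ VPi[OF vy1(1)] VPi[OF vy2(1)] Vg[OF vy1(1)] Vg[OF vy2(1)]])
             (use vy1 vy2 zb zPi in auto)
      next
        assume "i2 - i1 = 0" "j2 - j1 \<noteq> 0"
        then have gw: "g \<bullet> w = 0" using dir by simp
        have "\<forall>p\<in>Pi. g \<bullet> p = g \<bullet> a + (g \<bullet> u) * X p" using dot_Pi gw by (simp add: mult.commute)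
        then show ?thesis
          by (rule lin_bound[OF _ VPi[OF vx1(1)] VPi[OF vx2(1)] Vg[OF vx1(1)] Vg[OF vx2(1)]])
             (use vx1 vx2 zb zPi in auto)
      next
        assume h1: "i2 - i1 = - (j2 - j1)" "i2 - i1 \<noteq> 0"
        define I where "I = real_of_int (i2 - i1)"
        define J where "J = real_of_int (j2 - j1)"
        have dir': "I * (g \<bullet> u) + J * (g \<bullet> w) = 0" using dir unfolding I_def J_def .
        have JI: "J = - I" unfolding I_def J_def by (metis h1(1) minus_minus of_int_minus)
        have I0: "I \<noteq> 0" unfolding I_def using h1(2) by simp
        have "I * (g \<bullet> u - g \<bullet> w) = 0" using dir' JI by (simp add: algebra_simps)
        then have guw: "g \<bullet> w = g \<bullet> u" using I0 by simp
        have "\<forall>p\<in>Pi. g \<bullet> p = g \<bullet> a + (g \<bullet> u) * Sm p" using dot_Pi guw by (simp add: Sm_def algebra_simps)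
        then show ?thesis
          by (rule lin_bound[OF _ VPi[OF vs1(1)] VPi[OF vs2(1)] Vg[OF vs1(1)] Vg[OF vs2(1)]])
             (use vs1 vs2 zb zPi in auto)
      qed
      then show "z \<in> h" using hh by simp
    qed
    moreover have "z \<in> affine hull P" using zPi hullP by simp
    ultimately show "z \<in> P" using seq by blast
  qed
  have "P = R" using PR RP by blast
  then have "P = tb.region a u w a1 a2 b1 b2 c1 c2" unfolding R_def .
  moreover have "tb u w" by (rule tb_axioms)
  ultimately show ?thesis by blast
qed




definition Qb :: "real \<Rightarrow> real \<Rightarrow> real \<Rightarrow> real \<Rightarrow> real \<Rightarrow> real \<Rightarrow> real \<Rightarrow> (real^3) set" where
  "Qb l1 h1 l2 h2 l3 h3 s = {x. l1 \<le> x$1 \<and> x$1 \<le> h1 \<and> l2 \<le> x$2 \<and> x$2 \<le> h2 \<and> l3 \<le> x$3 \<and> x$3 \<le> h3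
      \<and> x$1 + x$2 + x$3 \<le> s}"

definition e1 :: "real^3" where "e1 = axis 1 1"
definition e2 :: "real^3" where "e2 = axis 2 1"
definition e3 :: "real^3" where "e3 = axis 3 1"

lemma e_inner [simp]: "e1 \<bullet> x = x$1" "e2 \<bullet> x = x$2" "e3 \<bullet> x = x$3"
  by (simp_all add: e1_def e2_def e3_def inner_axis')

lemma Qb_halfspaces: "Qb l1 h1 l2 h2 l3 h3 s =
   {x. (-e1) \<bullet> x \<le> -l1} \<inter> {x. e1 \<bullet> x \<le> h1} \<inter> {x. (-e2) \<bullet> x \<le> -l2} \<inter> {x. e2 \<bullet> x \<le> h2}
   \<inter> {x. (-e3) \<bullet> x \<le> -l3} \<inter> {x. e3 \<bullet> x \<le> h3} \<inter> {x. (e1 + e2 + e3) \<bullet> x \<le> s}"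
  by (auto simp: Qb_def inner_add_left)

lemma convex_Qb: "convex (Qb l1 h1 l2 h2 l3 h3 s)"
  unfolding Qb_halfspaces by (intro convex_Int convex_halfspace_le)

lemma polytope_Qb: "polytope (Qb l1 h1 l2 h2 l3 h3 s)"
proof -
  have "Qb l1 h1 l2 h2 l3 h3 s = cbox (vector [l1,l2,l3]) (vector [h1,h2,h3]) \<inter> {x. (e1 + e2 + e3) \<bullet> x \<le> s}"
    by (auto simp: Qb_def mem_box_cart forall_3 inner_add_left)
  then show ?thesis
    by (simp add: polytope_Int_polyhedron polytope_interval polyhedron_halfspace_le)
qed

lemma Qb_interior:
  fixes z :: "real^3"
  assumes "l1 < z$1" "z$1 < h1" "l2 < z$2" "z$2 < h2" "l3 < z$3" "z$3 < h3" "z$1 + z$2 + z$3 < s"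
  shows "z \<in> interior (Qb l1 h1 l2 h2 l3 h3 s)"
proof -
  define U where "U = {x. (-e1) \<bullet> x < -l1} \<inter> {x. e1 \<bullet> x < h1} \<inter> {x. (-e2) \<bullet> x < -l2} \<inter> {x. e2 \<bullet> x < h2}
   \<inter> {x. (-e3) \<bullet> x < -l3} \<inter> {x. e3 \<bullet> x < h3} \<inter> {x. (e1 + e2 + e3) \<bullet> x < s}"
  have "open U" unfolding U_def by (intro open_Int open_halfspace_lt)
  moreover have "U \<subseteq> Qb l1 h1 l2 h2 l3 h3 s" unfolding U_def Qb_def by (auto simp: inner_add_left)
  moreover have "z \<in> U" unfolding U_def using assms by (auto simp: inner_add_left)
  ultimately show ?thesis using interior_maximal by blast
qed

lemma Qb_facet:
  fixes z0 :: "real^3"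
  assumes z0: "l1 < z0$1" "z0$1 < h1" "l2 < z0$2" "z0$2 < h2" "l3 < z0$3" "z0$3 < h3" "z0$1 + z0$2 + z0$3 < s"
    and G: "G facet_of Qb l1 h1 l2 h2 l3 h3 s"
  shows "G = Qb l1 h1 l2 h2 l3 h3 s \<inter> {x. x$1 = l1} \<or> G = Qb l1 h1 l2 h2 l3 h3 s \<inter> {x. x$1 = h1}
    \<or> G = Qb l1 h1 l2 h2 l3 h3 s \<inter> {x. x$2 = l2} \<or> G = Qb l1 h1 l2 h2 l3 h3 s \<inter> {x. x$2 = h2}
    \<or> G = Qb l1 h1 l2 h2 l3 h3 s \<inter> {x. x$3 = l3} \<or> G = Qb l1 h1 l2 h2 l3 h3 s \<inter> {x. x$3 = h3}
    \<or> G = Qb l1 h1 l2 h2 l3 h3 s \<inter> {x. x$1 + x$2 + x$3 = s}"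
proof -
  let ?Q = "Qb l1 h1 l2 h2 l3 h3 s"
  have cQ: "convex ?Q" by (rule convex_Qb)
  have z0i: "z0 \<in> interior ?Q" using Qb_interior[OF z0] .
  then have adQ: "aff_dim ?Q = 3" using aff_dim_nonempty_interior[of ?Q] by auto
  have Gf: "G face_of ?Q" "G \<noteq> {}" "aff_dim G = 2" using G adQ by (auto simp: facet_of_def)
  have cG: "convex G" using Gf(1) face_of_imp_convex by blast
  have "G \<noteq> ?Q" using Gf(3) adQ by auto
  obtain z where z: "z \<in> rel_interior G" using rel_interior_eq_empty[OF cG] Gf(2) by blast
  have zG: "z \<in> G" using z rel_interior_subset by blast
  have zQ: "z \<in> ?Q" using zG Gf(1) face_of_imp_subset by blast
  have zni: "z \<notin> interior ?Q" using face_of_disjoint_interior[OF Gf(1) \<open>G \<noteq> ?Q\<close>] zG by blast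
  have key: "G = ?Q \<inter> {x. c \<bullet> x = b}"
    if cb: "\<forall>x\<in>?Q. c \<bullet> x \<le> b" "c \<bullet> z = b" "c \<bullet> z0 \<noteq> b" for c b
  proof -
    let ?H = "?Q \<inter> {x. c \<bullet> x = b}"
    have Hf: "?H face_of ?Q" by (rule face_of_Int_supporting_hyperplane_le[OF cQ]) (use cb in blast)
    have "G \<subseteq> ?H"
      by (rule subset_of_face_of[OF Hf]) (use Gf(1) face_of_imp_subset z zQ cb(2) in blast)+
    then have GH: "G face_of ?H" using face_of_subset[OF Gf(1)] by blast
    have "?H \<noteq> ?Q" using cb(3) interior_subset z0i by blast
    then have "aff_dim ?H < 3" using face_of_aff_dim_lt[OF cQ Hf] adQ by simp
    show ?thesis
    proof (rule ccontr)
      assume "G \<noteq> ?H"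
      then have "aff_dim G < aff_dim ?H" using face_of_aff_dim_lt[OF face_of_imp_convex[OF Hf] GH] by simp
      then show False using Gf(3) \<open>aff_dim ?H < 3\<close> by simp
    qed
  qed
  have tight: "z$1 = l1 \<or> z$1 = h1 \<or> z$2 = l2 \<or> z$2 = h2 \<or> z$3 = l3 \<or> z$3 = h3 \<or> z$1 + z$2 + z$3 = s"
  proof (rule ccontr)
    assume "\<not> ?thesis"
    then have "z \<in> interior ?Q" using zQ by (intro Qb_interior) (auto simp: Qb_def)
    then show False using zni by blast
  qed
  have Qb1: "\<forall>x\<in>?Q. (-e1) \<bullet> x \<le> -l1" "\<forall>x\<in>?Q. e1 \<bullet> x \<le> h1" "\<forall>x\<in>?Q. (-e2) \<bullet> x \<le> -l2" "\<forall>x\<in>?Q. e2 \<bullet> x \<le> h2"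
    "\<forall>x\<in>?Q. (-e3) \<bullet> x \<le> -l3" "\<forall>x\<in>?Q. e3 \<bullet> x \<le> h3" "\<forall>x\<in>?Q. (e1 + e2 + e3) \<bullet> x \<le> s"
    by (auto simp: Qb_def inner_add_left)
  have s1: "{x. (-e1) \<bullet> x = -l1} = {x. x$1 = l1}" by auto
  have s2: "{x. e1 \<bullet> x = h1} = {x. x$1 = h1}" by auto
  have s3: "{x. (-e2) \<bullet> x = -l2} = {x. x$2 = l2}" by auto
  have s4: "{x. e2 \<bullet> x = h2} = {x. x$2 = h2}" by auto
  have s5: "{x. (-e3) \<bullet> x = -l3} = {x. x$3 = l3}" by auto
  have s6: "{x. e3 \<bullet> x = h3} = {x. x$3 = h3}" by auto
  have s7: "{x. (e1 + e2 + e3) \<bullet> x = s} = {x. x$1 + x$2 + x$3 = s}" by (auto simp: inner_add_left)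
  from tight show ?thesis
  proof (elim disjE)
    assume "z$1 = l1" then show ?thesis using key[OF Qb1(1)] s1 z0 by auto
  next
    assume "z$1 = h1" then show ?thesis using key[OF Qb1(2)] s2 z0 by auto
  next
    assume "z$2 = l2" then show ?thesis using key[OF Qb1(3)] s3 z0 by auto
  next
    assume "z$2 = h2" then show ?thesis using key[OF Qb1(4)] s4 z0 by auto
  next
    assume "z$3 = l3" then show ?thesis using key[OF Qb1(5)] s5 z0 by auto
  next
    assume "z$3 = h3" then show ?thesis using key[OF Qb1(6)] s6 z0 by auto
  next
    assume "z$1 + z$2 + z$3 = s" then show ?thesis using key[OF Qb1(7)] s7 z0 by (auto simp: inner_add_left)
  qed
qed

lemma facet_img:
  fixes M :: "real^3 \<Rightarrow> real^3"
  assumes "linear M" "inj M"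
  shows "((+) p ` M ` G) facet_of ((+) p ` M ` S) \<longleftrightarrow> G facet_of S"
proof -
  have "inj ((+) p \<circ> M)" using assms(2) by (simp add: inj_compose)
  then have ne: "(+) p ` M ` G \<noteq> {} \<longleftrightarrow> G \<noteq> {}" by auto
  show ?thesis
    unfolding facet_of_def face_of_translation_eq face_of_linear_image[OF assms] aff_dim_translation_eq
      aff_dim_injective_linear_image[OF assms] using ne by simp
qed

lemma img_preimage:
  fixes M :: "real^3 \<Rightarrow> real^3"
  assumes "F \<subseteq> (+) p ` M ` S"
  shows "F = (+) p ` M ` {x\<in>S. p + M x \<in> F}"
  using assms by auto




context tb begin
lemma region_B: "region a1 a2 b1 b2 c1 c2 = {B x y | x y. of_int a1 \<le> x \<and> x \<le> of_int a2 \<and> of_int b1 \<le> y \<and> y \<le> of_int b2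
   \<and> of_int c1 \<le> x + y \<and> x + y \<le> of_int c2}"
proof
  show "region a1 a2 b1 b2 c1 c2 \<subseteq> {B x y | x y. of_int a1 \<le> x \<and> x \<le> of_int a2 \<and> of_int b1 \<le> y \<and> y \<le> of_int b2
   \<and> of_int c1 \<le> x + y \<and> x + y \<le> of_int c2}"
  proof
    fix p assume p: "p \<in> region a1 a2 b1 b2 c1 c2"
    then have pB: "B (X p) (Y p) = p" using Pi_B unfolding region_def by auto
    show "p \<in> {B x y | x y. of_int a1 \<le> x \<and> x \<le> of_int a2 \<and> of_int b1 \<le> y \<and> y \<le> of_int b2
      \<and> of_int c1 \<le> x + y \<and> x + y \<le> of_int c2}"
      by (intro CollectI exI[of _ "X p"] exI[of _ "Y p"]) (use p pB in \<open>auto simp: region_def Sm_def\<close>)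
  qed
  show "{B x y | x y. of_int a1 \<le> x \<and> x \<le> of_int a2 \<and> of_int b1 \<le> y \<and> y \<le> of_int b2
   \<and> of_int c1 \<le> x + y \<and> x + y \<le> of_int c2} \<subseteq> region a1 a2 b1 b2 c1 c2"
    by (auto simp: region_def)
qed
end

lemma f3_exists:
  assumes "tb u w"
  shows "\<exists>f3::real^3. f3 \<bullet> f3 = 1 \<and> f3 \<bullet> u = -1/2 \<and> f3 \<bullet> w = -1/2"
proof -
  have uu: "u \<bullet> u = 1" and ww: "w \<bullet> w = 1" and uw: "u \<bullet> w = 1/2" using assms by (simp_all add: tb_def)
  have wu: "w \<bullet> u = 1/2" using uw by (simp add: inner_commute)
  define n where "n = cross3 u w"
  have un: "u \<bullet> n = 0" "w \<bullet> n = 0" "n \<bullet> u = 0" "n \<bullet> w = 0"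
    unfolding n_def using dot_cross_self by (simp_all add: inner_commute)
  have "(norm n)\<^sup>2 = (norm u)\<^sup>2 * (norm w)\<^sup>2 - (u \<bullet> w)\<^sup>2" unfolding n_def by (rule norm_cross)
  then have "n \<bullet> n = (u \<bullet> u) * (w \<bullet> w) - (u \<bullet> w)\<^sup>2" by (simp only: power2_norm_eq_inner)
  then have nn: "n \<bullet> n = 3/4" using uu ww uw by (simp add: power2_eq_square)
  define k where "k = sqrt (8/9)"
  have kk: "k * k = 8/9" by (simp add: k_def)
  define f3 where "f3 = (-1/3) *\<^sub>R (u + w) + k *\<^sub>R n"
  have "f3 \<bullet> f3 = (1/9) * (u \<bullet> u + w \<bullet> u + u \<bullet> w + w \<bullet> w) + (k * k) * (n \<bullet> n)
        - (1/3) * k * (u \<bullet> n + w \<bullet> n + n \<bullet> u + n \<bullet> w)"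
    unfolding f3_def by (simp add: inner_add_left inner_add_right algebra_simps)
  then have f33: "f3 \<bullet> f3 = 1" using uu ww uw wu un nn kk by simp
  have "f3 \<bullet> u = (-1/3) * (u \<bullet> u + w \<bullet> u) + k * (n \<bullet> u)"
    unfolding f3_def by (simp add: inner_add_left inner_add_right algebra_simps)
  then have f3u: "f3 \<bullet> u = -1/2" using uu wu un by simp
  have "f3 \<bullet> w = (-1/3) * (u \<bullet> w + w \<bullet> w) + k * (n \<bullet> w)"
    unfolding f3_def by (simp add: inner_add_left inner_add_right algebra_simps)
  then have f3w: "f3 \<bullet> w = -1/2" using ww uw un by simp
  show ?thesis using f33 f3u f3w by blast
qed

lemma img_eq_gen:
  fixes M :: "real^3 \<Rightarrow> real^3"
  assumes "\<And>v. v \<in> S \<Longrightarrow> \<exists>y z. C y z \<and> p + M v = q + y *\<^sub>R f + z *\<^sub>R g"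
      and "\<And>y z. C y z \<Longrightarrow> \<exists>v\<in>S. p + M v = q + y *\<^sub>R f + z *\<^sub>R g"
  shows "(+) p ` M ` S = {q + y *\<^sub>R f + z *\<^sub>R g | y z. C y z}"
proof
  show "(+) p ` M ` S \<subseteq> {q + y *\<^sub>R f + z *\<^sub>R g | y z. C y z}"
  proof
    fix t assume "t \<in> (+) p ` M ` S"
    then obtain v where v: "v \<in> S" "t = p + M v" by auto
    then obtain y z where "C y z" "p + M v = q + y *\<^sub>R f + z *\<^sub>R g" using assms(1) by blast
    then show "t \<in> {q + y *\<^sub>R f + z *\<^sub>R g | y z. C y z}" using v(2) by blast
  qed
  show "{q + y *\<^sub>R f + z *\<^sub>R g | y z. C y z} \<subseteq> (+) p ` M ` S"
  proof
    fix t assume "t \<in> {q + y *\<^sub>R f + z *\<^sub>R g | y z. C y z}"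
    then obtain y z where yz: "C y z" "t = q + y *\<^sub>R f + z *\<^sub>R g" by blast
    then obtain v where "v \<in> S" "p + M v = q + y *\<^sub>R f + z *\<^sub>R g" using assms(2) by blast
    then show "t \<in> (+) p ` M ` S" using yz(2) by (metis image_eqI)
  qed
qed

lemma region_B':
  assumes "tb f g"
  shows "tb.region q f g a1 a2 b1 b2 c1 c2 = {q + y *\<^sub>R f + z *\<^sub>R g | y z. of_int a1 \<le> y \<and> y \<le> of_int a2
     \<and> of_int b1 \<le> z \<and> z \<le> of_int b2 \<and> of_int c1 \<le> y + z \<and> y + z \<le> of_int c2}"
  using tb.region_B[OF assms, of q] by (simp add: tb.B_def[OF assms])

lemma dome_main:
  assumes tbuw: "tb u w" and ad: "aff_dim (tb.region p0 u w a1 a2 b1 b2 c1 c2) = 2"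
  shows "can_be_domed (tb.region p0 u w a1 a2 b1 b2 c1 c2)"
proof -
  interpret tb p0 u w by (rule tbuw)
  let ?P = "region a1 a2 b1 b2 c1 c2"
  have wu: "w \<bullet> u = 1/2" using uw by (simp add: inner_commute)
  obtain f3 where f3: "f3 \<bullet> f3 = 1" "f3 \<bullet> u = -1/2" "f3 \<bullet> w = -1/2" using f3_exists[OF tbuw] by blast
  have f3': "u \<bullet> f3 = -1/2" "w \<bullet> f3 = -1/2" using f3 by (simp_all add: inner_commute)
  define f1 where "f1 = u + f3"
  define f2 where "f2 = w + f3"
  have dots: "f1 \<bullet> f1 = 1" "f2 \<bullet> f2 = 1" "f1 \<bullet> f2 = 1/2" "f1 \<bullet> f3 = 1/2" "f2 \<bullet> f3 = 1/2"
    "f2 \<bullet> f1 = 1/2" "f3 \<bullet> f1 = 1/2" "f3 \<bullet> f2 = 1/2" "f3 \<bullet> f3 = 1"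
    unfolding f1_def f2_def using f3 f3' uu ww uw wu by (simp_all add: inner_add_left inner_add_right)
  have tb23: "tb f2 f3" and tb13: "tb f1 f3" and tb12: "tb f1 f2" by (simp_all add: tb_def dots)
  define M :: "real^3 \<Rightarrow> real^3" where "M x = x$1 *\<^sub>R f1 + x$2 *\<^sub>R f2 + x$3 *\<^sub>R f3" for x
  have linM: "linear M" unfolding M_def by (intro linearI) (simp_all add: algebra_simps)
  have M0: "x = 0" if h: "M x = 0" for x
  proof -
    have "M x \<bullet> f1 = x$1 + x$2 * (1/2) + x$3 * (1/2)" "M x \<bullet> f2 = x$1 * (1/2) + x$2 + x$3 * (1/2)"
      "M x \<bullet> f3 = x$1 * (1/2) + x$2 * (1/2) + x$3"
      unfolding M_def by (simp_all add: inner_add_left dots)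
    then have "x$1 + x$2 * (1/2) + x$3 * (1/2) = 0" "x$1 * (1/2) + x$2 + x$3 * (1/2) = 0"
      "x$1 * (1/2) + x$2 * (1/2) + x$3 = 0" using h by simp_all
    then have "x$1 = 0" "x$2 = 0" "x$3 = 0" by linarith+
    then show "x = 0" by (simp add: vec_eq_iff forall_3)
  qed
  have injM: "inj M"
  proof (rule injI)
    fix x y assume "M x = M y"
    then have "M (x - y) = 0" using linear_diff[OF linM] by simp
    then have "x - y = 0" by (rule M0)
    then show "x = y" by simp
  qed
  obtain p where p: "p \<in> ?P" "of_int a1 < X p" "X p < of_int a2" "of_int b1 < Y p" "Y p < of_int b2"
     "of_int c1 < Sm p" "Sm p < of_int c2"
    using strict_point[OF ad] by blast
  define x where "x = X p"
  define y where "y = Y p"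
  have xy: "of_int a1 < x" "x < of_int a2" "of_int b1 < y" "y < of_int b2" "of_int c1 < x + y" "x + y < of_int c2"
    using p unfolding x_def y_def Sm_def by auto
  define \<epsilon> where "\<epsilon> = (of_int c2 - (x + y)) / 2"
  have eps: "2 * \<epsilon> = of_int c2 - (x + y)" unfolding \<epsilon>_def by simp
  define z0 :: "real^3" where "z0 = vector [x, y, -(x+y) - \<epsilon>]"
  define Q0 where "Q0 = Qb (of_int a1) (of_int a2) (of_int b1) (of_int b2) (- of_int c2) (- of_int c1) 0"
  have z0c: "of_int a1 < z0$1" "z0$1 < of_int a2" "of_int b1 < z0$2" "z0$2 < of_int b2" "- of_int c2 < z0$3"
     "z0$3 < - of_int c1" "z0$1 + z0$2 + z0$3 < 0"
    unfolding z0_def using xy eps by simp_all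
  have adQ0: "aff_dim Q0 = 3"
    using Qb_interior[OF z0c] aff_dim_nonempty_interior[of Q0] unfolding Q0_def by auto
  define Q where "Q = (+) p0 ` M ` Q0"
  have adQ: "aff_dim Q = 3" unfolding Q_def using adQ0 aff_dim_injective_linear_image[OF linM injM]
    by (simp add: aff_dim_translation_eq)
  have polyQ: "polytope Q" unfolding Q_def Q0_def
    using polytope_linear_image[OF linM polytope_Qb] by (simp add: polytope_translation_eq)
  have le: "a1 \<le> a2" "b1 \<le> b2" "c1 \<le> c2" using xy by linarith+
  have Mv: "p0 + M v = p0 + v$1 *\<^sub>R u + v$2 *\<^sub>R w + (v$1 + v$2 + v$3) *\<^sub>R f3" for v
    unfolding M_def f1_def f2_def by (simp add: algebra_simps)
  have I7: "(+) p0 ` M ` (Q0 \<inter> {x. x$1 + x$2 + x$3 = 0}) = ?P"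
    unfolding region_B'[OF tbuw]
  proof (rule img_eq_gen)
    fix v assume v: "v \<in> Q0 \<inter> {x. x$1 + x$2 + x$3 = 0}"
    show "\<exists>y z. (of_int a1 \<le> y \<and> y \<le> of_int a2 \<and> of_int b1 \<le> z \<and> z \<le> of_int b2 \<and> of_int c1 \<le> y + z \<and> y + z \<le> of_int c2)
         \<and> p0 + M v = p0 + y *\<^sub>R u + z *\<^sub>R w"
      by (intro exI[of _ "v$1"] exI[of _ "v$2"]) (use v in \<open>auto simp: Mv Q0_def Qb_def\<close>)
  next
    fix y z :: real assume yz: "of_int a1 \<le> y \<and> y \<le> of_int a2 \<and> of_int b1 \<le> z \<and> z \<le> of_int b2 \<and> of_int c1 \<le> y + z \<and> y + z \<le> of_int c2"
    show "\<exists>v\<in>Q0 \<inter> {x. x$1 + x$2 + x$3 = 0}. p0 + M v = p0 + y *\<^sub>R u + z *\<^sub>R w"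
      by (rule bexI[of _ "vector [y, z, -(y+z)]"]) (use yz in \<open>auto simp: Mv Q0_def Qb_def\<close>)
  qed
  have I1: "(+) p0 ` M ` (Q0 \<inter> {x. x$1 = of_int a1}) = tb.region (p0 + of_int a1 *\<^sub>R f1) f2 f3 b1 b2 (-c2) (-c1) (b1 - c2) (-a1)"
    unfolding region_B'[OF tb23]
  proof (rule img_eq_gen)
    fix v assume v: "v \<in> Q0 \<inter> {x. x$1 = of_int a1}"
    show "\<exists>y z. (of_int b1 \<le> y \<and> y \<le> of_int b2 \<and> of_int (-c2) \<le> z \<and> z \<le> of_int (-c1) \<and> of_int (b1 - c2) \<le> y + z \<and> y + z \<le> of_int (-a1))
         \<and> p0 + M v = (p0 + of_int a1 *\<^sub>R f1) + y *\<^sub>R f2 + z *\<^sub>R f3"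
      by (intro exI[of _ "v$2"] exI[of _ "v$3"]) (use v in \<open>auto simp: M_def Q0_def Qb_def algebra_simps\<close>)
  next
    fix y z :: real assume yz: "of_int b1 \<le> y \<and> y \<le> of_int b2 \<and> of_int (-c2) \<le> z \<and> z \<le> of_int (-c1) \<and> of_int (b1 - c2) \<le> y + z \<and> y + z \<le> of_int (-a1)"
    show "\<exists>v\<in>Q0 \<inter> {x. x$1 = of_int a1}. p0 + M v = (p0 + of_int a1 *\<^sub>R f1) + y *\<^sub>R f2 + z *\<^sub>R f3"
      by (rule bexI[of _ "vector [of_int a1, y, z]"]) (use yz le in \<open>auto simp: M_def Q0_def Qb_def algebra_simps\<close>)
  qed
  have I2: "(+) p0 ` M ` (Q0 \<inter> {x. x$1 = of_int a2}) = tb.region (p0 + of_int a2 *\<^sub>R f1) f2 f3 b1 b2 (-c2) (-c1) (b1 - c2) (-a2)"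
    unfolding region_B'[OF tb23]
  proof (rule img_eq_gen)
    fix v assume v: "v \<in> Q0 \<inter> {x. x$1 = of_int a2}"
    show "\<exists>y z. (of_int b1 \<le> y \<and> y \<le> of_int b2 \<and> of_int (-c2) \<le> z \<and> z \<le> of_int (-c1) \<and> of_int (b1 - c2) \<le> y + z \<and> y + z \<le> of_int (-a2))
         \<and> p0 + M v = (p0 + of_int a2 *\<^sub>R f1) + y *\<^sub>R f2 + z *\<^sub>R f3"
      by (intro exI[of _ "v$2"] exI[of _ "v$3"]) (use v in \<open>auto simp: M_def Q0_def Qb_def algebra_simps\<close>)
  next
    fix y z :: real assume yz: "of_int b1 \<le> y \<and> y \<le> of_int b2 \<and> of_int (-c2) \<le> z \<and> z \<le> of_int (-c1) \<and> of_int (b1 - c2) \<le> y + z \<and> y + z \<le> of_int (-a2)"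
    show "\<exists>v\<in>Q0 \<inter> {x. x$1 = of_int a2}. p0 + M v = (p0 + of_int a2 *\<^sub>R f1) + y *\<^sub>R f2 + z *\<^sub>R f3"
      by (rule bexI[of _ "vector [of_int a2, y, z]"]) (use yz le in \<open>auto simp: M_def Q0_def Qb_def algebra_simps\<close>)
  qed
  have I3: "(+) p0 ` M ` (Q0 \<inter> {x. x$2 = of_int b1}) = tb.region (p0 + of_int b1 *\<^sub>R f2) f1 f3 a1 a2 (-c2) (-c1) (a1 - c2) (-b1)"
    unfolding region_B'[OF tb13]
  proof (rule img_eq_gen)
    fix v assume v: "v \<in> Q0 \<inter> {x. x$2 = of_int b1}"
    show "\<exists>y z. (of_int a1 \<le> y \<and> y \<le> of_int a2 \<and> of_int (-c2) \<le> z \<and> z \<le> of_int (-c1) \<and> of_int (a1 - c2) \<le> y + z \<and> y + z \<le> of_int (-b1))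
         \<and> p0 + M v = (p0 + of_int b1 *\<^sub>R f2) + y *\<^sub>R f1 + z *\<^sub>R f3"
      by (intro exI[of _ "v$1"] exI[of _ "v$3"]) (use v in \<open>auto simp: M_def Q0_def Qb_def algebra_simps\<close>)
  next
    fix y z :: real assume yz: "of_int a1 \<le> y \<and> y \<le> of_int a2 \<and> of_int (-c2) \<le> z \<and> z \<le> of_int (-c1) \<and> of_int (a1 - c2) \<le> y + z \<and> y + z \<le> of_int (-b1)"
    show "\<exists>v\<in>Q0 \<inter> {x. x$2 = of_int b1}. p0 + M v = (p0 + of_int b1 *\<^sub>R f2) + y *\<^sub>R f1 + z *\<^sub>R f3"
      by (rule bexI[of _ "vector [y, of_int b1, z]"]) (use yz le in \<open>auto simp: M_def Q0_def Qb_def algebra_simps\<close>)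
  qed
  have I4: "(+) p0 ` M ` (Q0 \<inter> {x. x$2 = of_int b2}) = tb.region (p0 + of_int b2 *\<^sub>R f2) f1 f3 a1 a2 (-c2) (-c1) (a1 - c2) (-b2)"
    unfolding region_B'[OF tb13]
  proof (rule img_eq_gen)
    fix v assume v: "v \<in> Q0 \<inter> {x. x$2 = of_int b2}"
    show "\<exists>y z. (of_int a1 \<le> y \<and> y \<le> of_int a2 \<and> of_int (-c2) \<le> z \<and> z \<le> of_int (-c1) \<and> of_int (a1 - c2) \<le> y + z \<and> y + z \<le> of_int (-b2))
         \<and> p0 + M v = (p0 + of_int b2 *\<^sub>R f2) + y *\<^sub>R f1 + z *\<^sub>R f3"
      by (intro exI[of _ "v$1"] exI[of _ "v$3"]) (use v in \<open>auto simp: M_def Q0_def Qb_def algebra_simps\<close>)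
  next
    fix y z :: real assume yz: "of_int a1 \<le> y \<and> y \<le> of_int a2 \<and> of_int (-c2) \<le> z \<and> z \<le> of_int (-c1) \<and> of_int (a1 - c2) \<le> y + z \<and> y + z \<le> of_int (-b2)"
    show "\<exists>v\<in>Q0 \<inter> {x. x$2 = of_int b2}. p0 + M v = (p0 + of_int b2 *\<^sub>R f2) + y *\<^sub>R f1 + z *\<^sub>R f3"
      by (rule bexI[of _ "vector [y, of_int b2, z]"]) (use yz le in \<open>auto simp: M_def Q0_def Qb_def algebra_simps\<close>)
  qed
  have I5: "(+) p0 ` M ` (Q0 \<inter> {x. x$3 = - of_int c2}) = tb.region (p0 + (- of_int c2) *\<^sub>R f3) f1 f2 a1 a2 b1 b2 (a1 + b1) c2"
    unfolding region_B'[OF tb12]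
  proof (rule img_eq_gen)
    fix v assume v: "v \<in> Q0 \<inter> {x. x$3 = - of_int c2}"
    show "\<exists>y z. (of_int a1 \<le> y \<and> y \<le> of_int a2 \<and> of_int b1 \<le> z \<and> z \<le> of_int b2 \<and> of_int (a1 + b1) \<le> y + z \<and> y + z \<le> of_int c2)
         \<and> p0 + M v = (p0 + (- of_int c2) *\<^sub>R f3) + y *\<^sub>R f1 + z *\<^sub>R f2"
      by (intro exI[of _ "v$1"] exI[of _ "v$2"]) (use v in \<open>auto simp: M_def Q0_def Qb_def algebra_simps\<close>)
  next
    fix y z :: real assume yz: "of_int a1 \<le> y \<and> y \<le> of_int a2 \<and> of_int b1 \<le> z \<and> z \<le> of_int b2 \<and> of_int (a1 + b1) \<le> y + z \<and> y + z \<le> of_int c2"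
    show "\<exists>v\<in>Q0 \<inter> {x. x$3 = - of_int c2}. p0 + M v = (p0 + (- of_int c2) *\<^sub>R f3) + y *\<^sub>R f1 + z *\<^sub>R f2"
      by (rule bexI[of _ "vector [y, z, - of_int c2]"]) (use yz le in \<open>auto simp: M_def Q0_def Qb_def algebra_simps\<close>)
  qed
  have I6: "(+) p0 ` M ` (Q0 \<inter> {x. x$3 = - of_int c1}) = tb.region (p0 + (- of_int c1) *\<^sub>R f3) f1 f2 a1 a2 b1 b2 (a1 + b1) c1"
    unfolding region_B'[OF tb12]
  proof (rule img_eq_gen)
    fix v assume v: "v \<in> Q0 \<inter> {x. x$3 = - of_int c1}"
    show "\<exists>y z. (of_int a1 \<le> y \<and> y \<le> of_int a2 \<and> of_int b1 \<le> z \<and> z \<le> of_int b2 \<and> of_int (a1 + b1) \<le> y + z \<and> y + z \<le> of_int c1)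
         \<and> p0 + M v = (p0 + (- of_int c1) *\<^sub>R f3) + y *\<^sub>R f1 + z *\<^sub>R f2"
      by (intro exI[of _ "v$1"] exI[of _ "v$2"]) (use v in \<open>auto simp: M_def Q0_def Qb_def algebra_simps\<close>)
  next
    fix y z :: real assume yz: "of_int a1 \<le> y \<and> y \<le> of_int a2 \<and> of_int b1 \<le> z \<and> z \<le> of_int b2 \<and> of_int (a1 + b1) \<le> y + z \<and> y + z \<le> of_int c1"
    show "\<exists>v\<in>Q0 \<inter> {x. x$3 = - of_int c1}. p0 + M v = (p0 + (- of_int c1) *\<^sub>R f3) + y *\<^sub>R f1 + z *\<^sub>R f2"
      by (rule bexI[of _ "vector [y, z, - of_int c1]"]) (use yz le in \<open>auto simp: M_def Q0_def Qb_def algebra_simps\<close>)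
  qed
  have sumset: "{x::real^3. (e1 + e2 + e3) \<bullet> x = 0} = {x. x$1 + x$2 + x$3 = 0}" by (auto simp: inner_add_left)
  have Pne: "?P \<noteq> {}" using ad by auto
  have cQ0: "convex Q0" unfolding Q0_def by (rule convex_Qb)
  have Gsum: "(Q0 \<inter> {x. x$1 + x$2 + x$3 = 0}) facet_of Q0"
  proof -
    have "(Q0 \<inter> {x. (e1 + e2 + e3) \<bullet> x = 0}) face_of Q0"
      by (rule face_of_Int_supporting_hyperplane_le[OF cQ0]) (auto simp: Q0_def Qb_def inner_add_left)
    then have f: "(Q0 \<inter> {x. x$1 + x$2 + x$3 = 0}) face_of Q0" using sumset by simp
    have ne: "Q0 \<inter> {x. x$1 + x$2 + x$3 = 0} \<noteq> {}" using I7 Pne by (metis image_empty)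
    have "aff_dim ((+) p0 ` M ` (Q0 \<inter> {x. x$1 + x$2 + x$3 = 0})) = aff_dim (Q0 \<inter> {x. x$1 + x$2 + x$3 = 0})"
      by (simp add: aff_dim_translation_eq aff_dim_injective_linear_image[OF linM injM])
    then have "aff_dim (Q0 \<inter> {x. x$1 + x$2 + x$3 = 0}) = aff_dim ?P" unfolding I7 by simp
    then show ?thesis unfolding facet_of_def using f ne ad adQ0 by simp
  qed
  have "((+) p0 ` M ` (Q0 \<inter> {x. x$1 + x$2 + x$3 = 0})) facet_of ((+) p0 ` M ` Q0)"
    using Gsum by (simp add: facet_img[OF linM injM])
  then have Pf: "?P facet_of Q" unfolding Q_def I7 .
  have others: "convex_polyiamond F" if F: "F facet_of Q" "F \<noteq> ?P" for F
  proof -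
    have "F \<subseteq> Q" using F(1) facet_of_imp_subset by blast
    then have FG: "F = (+) p0 ` M ` {x\<in>Q0. p0 + M x \<in> F}" unfolding Q_def by (rule img_preimage)
    define G where "G = {x\<in>Q0. p0 + M x \<in> F}"
    have FG': "F = (+) p0 ` M ` G" using FG unfolding G_def .
    have "((+) p0 ` M ` G) facet_of ((+) p0 ` M ` Q0)" using F(1) FG' unfolding Q_def by simp
    then have Gf: "G facet_of Q0" by (simp add: facet_img[OF linM injM])
    have adF: "aff_dim F = 2" using F(1) adQ by (simp add: facet_of_def)
    from Qb_facet[OF z0c, of G, folded Q0_def, OF Gf]
    show ?thesis
    proof (elim disjE)
      assume h: "G = Q0 \<inter> {x. x$1 = of_int a1}"
      have e: "F = tb.region (p0 + of_int a1 *\<^sub>R f1) f2 f3 b1 b2 (-c2) (-c1) (b1 - c2) (-a1)"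
        using FG' h I1 by simp
      show ?thesis unfolding e by (rule tb.GL[OF tb23]) (use adF e in simp)
    next
      assume h: "G = Q0 \<inter> {x. x$1 = of_int a2}"
      have e: "F = tb.region (p0 + of_int a2 *\<^sub>R f1) f2 f3 b1 b2 (-c2) (-c1) (b1 - c2) (-a2)"
        using FG' h I2 by simp
      show ?thesis unfolding e by (rule tb.GL[OF tb23]) (use adF e in simp)
    next
      assume h: "G = Q0 \<inter> {x. x$2 = of_int b1}"
      have e: "F = tb.region (p0 + of_int b1 *\<^sub>R f2) f1 f3 a1 a2 (-c2) (-c1) (a1 - c2) (-b1)"
        using FG' h I3 by simp
      show ?thesis unfolding e by (rule tb.GL[OF tb13]) (use adF e in simp)
    next
      assume h: "G = Q0 \<inter> {x. x$2 = of_int b2}"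
      have e: "F = tb.region (p0 + of_int b2 *\<^sub>R f2) f1 f3 a1 a2 (-c2) (-c1) (a1 - c2) (-b2)"
        using FG' h I4 by simp
      show ?thesis unfolding e by (rule tb.GL[OF tb13]) (use adF e in simp)
    next
      assume h: "G = Q0 \<inter> {x. x$3 = - of_int c2}"
      have e: "F = tb.region (p0 + (- of_int c2) *\<^sub>R f3) f1 f2 a1 a2 b1 b2 (a1 + b1) c2"
        using FG' h I5 by simp
      show ?thesis unfolding e by (rule tb.GL[OF tb12]) (use adF e in simp)
    next
      assume h: "G = Q0 \<inter> {x. x$3 = - of_int c1}"
      have e: "F = tb.region (p0 + (- of_int c1) *\<^sub>R f3) f1 f2 a1 a2 b1 b2 (a1 + b1) c1"
        using FG' h I6 by simp
      show ?thesis unfolding e by (rule tb.GL[OF tb12]) (use adF e in simp)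
    next
      assume h: "G = Q0 \<inter> {x. x$1 + x$2 + x$3 = 0}"
      have "F = ?P" using FG' h I7 by simp
      then show ?thesis using F(2) by simp
    qed
  qed
  show ?thesis unfolding can_be_domed_def convex_polyhedron_def
    using polyQ adQ Pf others by blast
qed



theorem lemma13:
  fixes P :: "(real^3) set"
  assumes "convex_polyiamond P"
  shows "can_be_domed P"
proof -
  obtain p0 u w a1 a2 b1 b2 c1 c2 where "tb u w" "P = tb.region p0 u w a1 a2 b1 b2 c1 c2"
    using convex_polyiamond_char[OF assms] by blast
  moreover have "aff_dim P = 2" using assms by (simp add: convex_polyiamond_def polyiamond_def)
  ultimately show ?thesis using dome_main by blast
qed

end
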